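(* Fix $p\in(0,1]$. Let $G=(G_i)_{i\in\mathbb{Z}}$ be a sequence of random variables taking values in $\mathbb{Z}$. The following are equivalent: (P1) $(G_i)_{i\in\mathbb{Z}}$ is a family of independent $\mathrm{Geom}_+(p)$ random variables; (P2) $(G_i)_{i\ge0}$ is a family of independent $\mathrm{Geom}_+(p)$ random variables, and $\Phi_n(G)\overset{d}{=}G$ for every integer $n\ge0$.
   Context: $\mathrm{Geom}_+(p)$: $\mathbb{P}(G=k)=(1-p)^{k-1}p$ for $k\ge1$. For an integer sequence $g=(g_i)_{i\in\mathbb{Z}}$ and $n\ge0$, let $s_n=\min\{i\ge0:g_0+\dots+g_i>n\}$ (assumed finite, which holds when $g_i\ge1$ for $i\ge0$). Define $\Phi_n(g)=(\phi_i)_{i\in\mathbb{Z}}$ by: $\phi_i=g_{s_n+i}$ for $i\ge1$; $\phi_0=\sum_{j=0}^{s_n}g_j-n$; and, if $s_n\ge1$: $\phi_{-1}=n+1-\sum_{j=0}^{s_n-1}g_j$, $\phi_i=g_{s_n+i+1}$ for $-s_n\le i\le-2$, $\phi_{-s_n-1}=g_0+g_{-1}-1$, $\phi_i=g_{s_n+i}$ for $i\le-s_n-2$; if $s_n=0$: $\phi_{-1}=n+g_{-1}$ and $\phi_i=g_i$ for $i\le-2$. *)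

theory Defs
  imports "HOL-Probability.Probability"
begin

definition s_idx :: "nat \<Rightarrow> (int \<Rightarrow> int) \<Rightarrow> int" where
  "s_idx n g = int (LEAST s::nat. (\<Sum>j\<in>{0..int s}. g j) > int n)"

definition Phi :: "nat \<Rightarrow> (int \<Rightarrow> int) \<Rightarrow> (int \<Rightarrow> int)" where
  "Phi n g = (\<lambda>i. let s = s_idx n g in
     if i \<ge> 1 then g (s + i)
     else if i = 0 then (\<Sum>j\<in>{0..s}. g j) - int n
     else if s \<ge> 1 then
       (if i = -1 then int n + 1 - (\<Sum>j\<in>{0..s-1}. g j)
        else if -s \<le> i \<and> i \<le> -2 then g (s + i + 1)
        else if i = -s - 1 then g 0 + g (-1) - 1
        else g (s + i))
     else (if i = -1 then int n + g (-1) else g i))"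

definition geom_pos_rv :: "'a measure \<Rightarrow> real \<Rightarrow> ('a \<Rightarrow> int) \<Rightarrow> bool" where
  "geom_pos_rv M p X \<longleftrightarrow>
     (\<forall>k::int. measure M {\<omega> \<in> space M. X \<omega> = k} =
        (if k \<ge> 1 then (1 - p) ^ nat (k - 1) * p else 0))"

definition seq_law :: "'a measure \<Rightarrow> ('a \<Rightarrow> (int \<Rightarrow> int)) \<Rightarrow> (int \<Rightarrow> int) measure" where
  "seq_law M X = distr M (Pi\<^sub>M UNIV (\<lambda>_. count_space UNIV)) X"

end

theory Submission
  imports Defs
begin


lemma sum_ivl_last: "(a::int) \<le> b \<Longrightarrow> (\<Sum>i\<in>{a..b}. f i) = (\<Sum>i\<in>{a..b-1}. f i) + f b"
proof -
  assume "a \<le> b"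
  then have "{a..b} = insert b {a..b-1}" by auto
  then show ?thesis by (simp add: add.commute)
qed

lemma sum_ivl_first: "(a::int) \<le> b \<Longrightarrow> (\<Sum>i\<in>{a..b}. f i) = f a + (\<Sum>i\<in>{a+1..b}. f i)"
proof -
  assume "a \<le> b"
  then have "{a..b} = insert a {a+1..b}" by auto
  then show ?thesis by simp
qed

lemma sum_ivl_shift: "(\<Sum>i\<in>{a..b}. f (i + c)) = (\<Sum>i\<in>{a+c..b+c}. (f i :: 'b::comm_monoid_add))"
  for a b c :: int
  by (rule sum.reindex_bij_witness[where i="\<lambda>i. i - c" and j="\<lambda>i. i + c"]) auto

definition Lmap :: "nat \<Rightarrow> nat \<Rightarrow> (int \<Rightarrow> int) \<Rightarrow> int \<Rightarrow> int" where
  "Lmap n s0 g i = (let s = int s0 in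
     if i \<ge> 1 then g (s + i)
     else if i = 0 then (\<Sum>j\<in>{0..s}. g j) - int n
     else if s \<ge> 1 then
       (if i = -1 then int n + 1 - (\<Sum>j\<in>{0..s-1}. g j)
        else if -s \<le> i \<and> i \<le> -2 then g (s + i + 1)
        else if i = -s - 1 then g 0 + g (-1) - 1
        else g (s + i))
     else (if i = -1 then int n + g (-1) else g i))"

lemma s_idx_nonneg: "s_idx n g = int (nat (s_idx n g))"
  by (simp add: s_idx_def)

lemma Phi_Lmap: "Phi n g = Lmap n (nat (s_idx n g)) g"
proof -
  have e: "int (nat (s_idx n g)) = s_idx n g" by (simp add: s_idx_def)
  show ?thesis unfolding Phi_def Lmap_def Let_def e ..
qed

definition Linv :: "nat \<Rightarrow> nat \<Rightarrow> (int \<Rightarrow> int) \<Rightarrow> int \<Rightarrow> int" where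
  "Linv n s0 y j = (let s = int s0 in
     if s = 0 then (if j = 0 then y 0 + int n else if j = -1 then y (-1) - int n else y j)
     else if j \<ge> s + 1 then y (j - s)
     else if j = s then y 0 + y (-1) - 1
     else if 1 \<le> j \<and> j \<le> s - 1 then y (j - s - 1)
     else if j = 0 then int n + 1 - (\<Sum>i\<in>{-s..-1}. y i)
     else if j = -1 then y (-s - 1) + (\<Sum>i\<in>{-s..-1}. y i) - int n
     else y (j - s))"

definition Csum :: "nat \<Rightarrow> nat \<Rightarrow> (int \<Rightarrow> int) \<Rightarrow> bool" where
  "Csum n s g \<longleftrightarrow> (\<Sum>j\<in>{0..int s - 1}. g j) \<le> int n \<and> int n < (\<Sum>j\<in>{0..int s}. g j)"

definition Dsum :: "nat \<Rightarrow> nat \<Rightarrow> (int \<Rightarrow> int) \<Rightarrow> bool" where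
  "Dsum n s y \<longleftrightarrow> (\<Sum>i\<in>{- int s..-1}. y i) \<le> int n \<and> int n < (\<Sum>i\<in>{- int s - 1..-1}. y i)"

lemma sumA: "s \<ge> 1 \<Longrightarrow> (\<Sum>j\<in>{0..s - 1}. x j) = x 0 + (\<Sum>i\<in>{-s..-2}. x (i + s + 1))" for s :: int
proof -
  assume s: "s \<ge> 1"
  have "(\<Sum>i\<in>{-s..-2}. x (i + s + 1)) = (\<Sum>i\<in>{-s..-2}. x (i + (s + 1)))" by (simp add: add.assoc)
  also have "\<dots> = (\<Sum>i\<in>{1..s-1}. x i)" by (subst sum_ivl_shift) simp
  finally show ?thesis using s by (simp add: sum_ivl_first)
qed

lemma L_Linv: "Lmap n s (Linv n s y) i = y i"
proof (cases "s = 0")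
  case True
  then show ?thesis by (simp add: Lmap_def Linv_def)
next
  case False
  let ?s = "int s"
  have s1: "?s \<ge> 1" using False by simp
  have S0: "(\<Sum>j\<in>{0..?s-1}. Linv n s y j) = int n + 1 - y (-1)"
  proof -
    have "(\<Sum>j\<in>{0..?s-1}. Linv n s y j) = Linv n s y 0 + (\<Sum>i\<in>{-?s..-2}. Linv n s y (i + ?s + 1))"
      by (rule sumA[OF s1])
    also have "(\<Sum>i\<in>{-?s..-2}. Linv n s y (i + ?s + 1)) = (\<Sum>i\<in>{-?s..-2}. y i)"
      by (rule sum.cong) (auto simp: Linv_def)
    also have "Linv n s y 0 = int n + 1 - (\<Sum>i\<in>{-?s..-1}. y i)" using s1 by (simp add: Linv_def)
    also have "(\<Sum>i\<in>{-?s..-1}. y i) = (\<Sum>i\<in>{-?s..-2}. y i) + y (-1)"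
      using s1 by (subst sum_ivl_last) auto
    finally show ?thesis by simp
  qed
  have S1: "(\<Sum>j\<in>{0..?s}. Linv n s y j) = int n + y 0"
    using S0 s1 by (subst sum_ivl_last) (auto simp: Linv_def)
  show ?thesis
    using s1 S0 S1 by (auto simp: Lmap_def Linv_def Let_def)
qed

lemma Linv_L: "Linv n s (Lmap n s x) j = x j"
proof (cases "s = 0")
  case True
  then show ?thesis by (simp add: Lmap_def Linv_def)
next
  case False
  let ?s = "int s"
  have s1: "?s \<ge> 1" using False by simp
  have T: "(\<Sum>i\<in>{-?s..-1}. Lmap n s x i) = int n + 1 - x 0"
  proof -
    have "(\<Sum>i\<in>{-?s..-1}. Lmap n s x i) = (\<Sum>i\<in>{-?s..-2}. Lmap n s x i) + Lmap n s x (-1)"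
      using s1 by (subst sum_ivl_last) auto
    also have "(\<Sum>i\<in>{-?s..-2}. Lmap n s x i) = (\<Sum>i\<in>{-?s..-2}. x (i + ?s + 1))"
      by (rule sum.cong) (auto simp: Lmap_def Let_def add_ac)
    also have "\<dots> = (\<Sum>j\<in>{0..?s - 1}. x j) - x 0" using sumA[OF s1, of x] by simp
    also have "Lmap n s x (-1) = int n + 1 - (\<Sum>j\<in>{0..?s - 1}. x j)" using s1 by (simp add: Lmap_def)
    finally show ?thesis by simp
  qed
  have S1: "(\<Sum>j\<in>{0..?s}. x j) = (\<Sum>j\<in>{0..?s-1}. x j) + x ?s"
    using s1 by (subst sum_ivl_last) auto
  show ?thesis
    using s1 T S1 by (auto simp: Lmap_def Linv_def Let_def)
qed

definition geo :: "real \<Rightarrow> int \<Rightarrow> real" where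
  "geo p k = (if k \<ge> 1 then (1-p)^nat(k-1) * p else 0)"

lemma geo3:
  assumes "a \<ge> 1" "b \<ge> 1" "c \<ge> 1" "a' \<ge> 1" "b' \<ge> 1" "c' \<ge> 1" "a + b + c = a' + b' + c'"
  shows "geo p a * geo p b * geo p c = geo p a' * geo p b' * geo p c'"
proof -
  have e: "nat (a-1) + nat (b-1) + nat (c-1) = nat (a'-1) + nat (b'-1) + nat (c'-1)" using assms by linarith
  have g: "geo p k = (1-p)^nat(k-1) * p" if "k \<ge> 1" for k using that by (simp add: geo_def)
  have "geo p a * geo p b * geo p c = ((1-p)^nat(a-1) * (1-p)^nat(b-1) * (1-p)^nat(c-1)) * (p*p*p)"
    using assms by (simp add: g mult_ac)
  also have "\<dots> = (1-p)^(nat(a-1)+nat(b-1)+nat(c-1)) * (p*p*p)" by (simp add: power_add)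
  also have "\<dots> = ((1-p)^nat(a'-1) * (1-p)^nat(b'-1) * (1-p)^nat(c'-1)) * (p*p*p)" unfolding e by (simp add: power_add)
  also have "\<dots> = geo p a' * geo p b' * geo p c'"
    using assms by (simp add: g mult_ac)
  finally show ?thesis .
qed

lemma geo2:
  assumes "a \<ge> 1" "b \<ge> 1" "a' \<ge> 1" "b' \<ge> 1" "a + b = a' + b'"
  shows "geo p a * geo p b = geo p a' * geo p b'"
  using geo3[of a b 1 a' b' 1 p] assms by (simp add: geo_def)

definition W1 :: "int \<Rightarrow> nat \<Rightarrow> int set" where "W1 K s = {-1-K..int s+K}"
definition W2 :: "int \<Rightarrow> nat \<Rightarrow> int set" where "W2 K s = {-int s-1-K..K}"

lemma sum_L: "int s \<ge> 1 \<Longrightarrow> (\<Sum>i\<in>{-int s..-1}. Lmap n s x i) = int n + 1 - x 0"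
proof -
  let ?s = "int s"
  assume s1: "?s \<ge> 1"
  have "(\<Sum>i\<in>{-?s..-1}. Lmap n s x i) = (\<Sum>i\<in>{-?s..-2}. Lmap n s x i) + Lmap n s x (-1)"
    using s1 by (subst sum_ivl_last) auto
  also have "(\<Sum>i\<in>{-?s..-2}. Lmap n s x i) = (\<Sum>i\<in>{-?s..-2}. x (i + ?s + 1))"
    by (rule sum.cong) (auto simp: Lmap_def Let_def add_ac)
  also have "\<dots> = (\<Sum>j\<in>{0..?s - 1}. x j) - x 0" using sumA[OF s1, of x] by simp
  also have "Lmap n s x (-1) = int n + 1 - (\<Sum>j\<in>{0..?s - 1}. x j)" using s1 by (simp add: Lmap_def)
  finally show ?thesis by simp
qed

lemma sum_Linv: "int s \<ge> 1 \<Longrightarrow> (\<Sum>j\<in>{0..int s-1}. Linv n s y j) = int n + 1 - y (-1)"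
proof -
  assume s1: "int s \<ge> 1"
  have "Lmap n s (Linv n s y) (-1) = y (-1)" by (rule L_Linv)
  then show ?thesis using s1 by (simp add: Lmap_def)
qed

lemma L_D: "Csum n s x \<Longrightarrow> x 0 \<ge> 1 \<Longrightarrow> x (-1) \<ge> 1 \<Longrightarrow> Dsum n s (Lmap n s x)"
proof (cases "s = 0")
  case True
  assume "Csum n s x" "x 0 \<ge> 1" "x (-1) \<ge> 1"
  then show ?thesis using True by (simp add: Dsum_def Lmap_def)
next
  case False
  assume C: "Csum n s x" "x 0 \<ge> 1" "x (-1) \<ge> 1"
  have s1: "int s \<ge> 1" using False by simp
  have "(\<Sum>i\<in>{-int s-1..-1}. Lmap n s x i) = Lmap n s x (-int s - 1) + (\<Sum>i\<in>{-int s..-1}. Lmap n s x i)"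
    using s1 by (subst sum_ivl_first) auto
  then show ?thesis using C s1 sum_L[OF s1, of n x] by (simp add: Dsum_def Lmap_def)
qed

lemma Linv_C: "Dsum n s y \<Longrightarrow> y 0 \<ge> 1 \<Longrightarrow> y (-1) \<ge> 1 \<Longrightarrow> Csum n s (Linv n s y)"
proof (cases "s = 0")
  case True
  assume "Dsum n s y" "y 0 \<ge> 1" "y (-1) \<ge> 1"
  then show ?thesis using True by (simp add: Csum_def Linv_def)
next
  case False
  assume C: "Dsum n s y" "y 0 \<ge> 1" "y (-1) \<ge> 1"
  have s1: "int s \<ge> 1" using False by simp
  have "(\<Sum>j\<in>{0..int s}. Linv n s y j) = (\<Sum>j\<in>{0..int s-1}. Linv n s y j) + Linv n s y (int s)"
    using s1 by (subst sum_ivl_last) auto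
  then show ?thesis using C s1 sum_Linv[OF s1, of n y] by (simp add: Csum_def Linv_def)
qed

lemma L_pos:
  assumes K: "K \<ge> 0" and C: "Csum n s x" and P: "\<forall>j\<in>W1 K s. x j \<ge> 1" and i: "i \<in> W2 K s"
  shows "Lmap n s x i \<ge> 1"
proof -
  have P': "x j \<ge> 1" if "-1-K \<le> j" "j \<le> int s + K" for j using P that by (auto simp: W1_def)
  have i': "-int s - 1 - K \<le> i" "i \<le> K" using i by (auto simp: W2_def)
  have x0: "x 0 \<ge> 1" "x (-1) \<ge> 1" using P' K by auto
  show ?thesis
  proof (cases "s = 0")
    case True
    then show ?thesis using C i' K x0 by (auto simp: Lmap_def Csum_def Let_def intro!: P')
  next
    case False
    then show ?thesis using C i' K x0 by (auto simp: Lmap_def Csum_def Let_def intro!: P')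
  qed
qed

lemma Linv_pos:
  assumes K: "K \<ge> 0" and D: "Dsum n s y" and P: "\<forall>i\<in>W2 K s. y i \<ge> 1" and j: "j \<in> W1 K s"
  shows "Linv n s y j \<ge> 1"
proof -
  have P': "y i \<ge> 1" if "-int s-1-K \<le> i" "i \<le> K" for i using P that by (auto simp: W2_def)
  have j': "-1-K \<le> j" "j \<le> int s + K" using j by (auto simp: W1_def)
  have y0: "y 0 \<ge> 1" "y (-1) \<ge> 1" "y (-int s - 1) \<ge> 1" using P' K by auto
  show ?thesis
  proof (cases "s = 0")
    case True
    then show ?thesis using D j' K y0 by (auto simp: Linv_def Dsum_def Let_def intro!: P')
  next
    case False
    then have s1: "int s \<ge> 1" by simp
    have "(\<Sum>i\<in>{-int s-1..-1}. y i) = y (-int s - 1) + (\<Sum>i\<in>{-int s..-1}. y i)"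
      using s1 by (subst sum_ivl_first) auto
    then show ?thesis using D j' K y0 False by (auto simp: Linv_def Dsum_def Let_def intro!: P')
  qed
qed

lemma L_local:
  assumes K: "K \<ge> 0" and i: "i \<in> W2 K s" and E: "\<forall>j\<in>W1 K s. x j = x' j"
  shows "Lmap n s x i = Lmap n s x' i"
proof -
  have E': "x j = x' j" if "-1-K \<le> j" "j \<le> int s + K" for j using E that by (auto simp: W1_def)
  have i': "-int s - 1 - K \<le> i" "i \<le> K" using i by (auto simp: W2_def)
  have S1: "(\<Sum>j\<in>{0..int s}. x j) = (\<Sum>j\<in>{0..int s}. x' j)" using K by (intro sum.cong refl E') auto
  have S2: "(\<Sum>j\<in>{0..int s - 1}. x j) = (\<Sum>j\<in>{0..int s - 1}. x' j)" using K by (intro sum.cong refl E') auto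
  have "x 0 = x' 0" "x (-1) = x' (-1)" using K by (auto intro!: E')
  then show ?thesis using i' K S1 S2 by (auto simp: Lmap_def Let_def intro!: E')
qed

lemma Linv_local:
  assumes K: "K \<ge> 0" and j: "j \<in> W1 K s" and E: "\<forall>i\<in>W2 K s. y i = y' i"
  shows "Linv n s y j = Linv n s y' j"
proof -
  have E': "y i = y' i" if "-int s-1-K \<le> i" "i \<le> K" for i using E that by (auto simp: W2_def)
  have j': "-1-K \<le> j" "j \<le> int s + K" using j by (auto simp: W1_def)
  have S1: "(\<Sum>i\<in>{-int s..-1}. y i) = (\<Sum>i\<in>{-int s..-1}. y' i)" using K by (intro sum.cong refl E') auto
  have "y 0 = y' 0" "y (-1) = y' (-1)" "y (-int s - 1) = y' (-int s - 1)" using K by (auto intro!: E')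
  then show ?thesis using j' K S1 by (auto simp: Linv_def Let_def intro!: E')
qed

lemma Csum_local: "(\<forall>j\<in>{0..int s}. x j = x' j) \<Longrightarrow> Csum n s x = Csum n s x'"
proof -
  assume E: "\<forall>j\<in>{0..int s}. x j = x' j"
  have S1: "(\<Sum>j\<in>{0..int s}. x j) = (\<Sum>j\<in>{0..int s}. x' j)" using E by (intro sum.cong) auto
  have S2: "(\<Sum>j\<in>{0..int s - 1}. x j) = (\<Sum>j\<in>{0..int s - 1}. x' j)" using E by (intro sum.cong) auto
  show ?thesis using S1 S2 by (simp add: Csum_def)
qed

lemma Dsum_local: "(\<forall>i\<in>{-int s - 1..-1}. y i = y' i) \<Longrightarrow> Dsum n s y = Dsum n s y'"
proof -
  assume E: "\<forall>i\<in>{-int s - 1..-1}. y i = y' i"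
  have S1: "(\<Sum>i\<in>{-int s - 1..-1}. y i) = (\<Sum>i\<in>{-int s - 1..-1}. y' i)" using E by (intro sum.cong) auto
  have S2: "(\<Sum>i\<in>{-int s..-1}. y i) = (\<Sum>i\<in>{-int s..-1}. y' i)" using E by (intro sum.cong) auto
  show ?thesis using S1 S2 by (simp add: Dsum_def)
qed

lemma prod_remove3:
  assumes "finite A" "a \<in> A" "b \<in> A" "c \<in> A" "a \<noteq> b" "a \<noteq> c" "b \<noteq> c"
  shows "prod f A = f a * f b * f c * prod f (A - {a, b, c})"
proof -
  have "prod f A = f a * prod f (A - {a})" using assms by (simp add: prod.remove)
  also have "prod f (A - {a}) = f b * prod f (A - {a} - {b})" using assms by (intro prod.remove) auto
  also have "prod f (A - {a} - {b}) = f c * prod f (A - {a} - {b} - {c})" using assms by (intro prod.remove) auto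
  also have "A - {a} - {b} - {c} = A - {a, b, c}" by auto
  finally show ?thesis by (simp add: mult_ac)
qed

lemma prod_remove2:
  assumes "finite A" "a \<in> A" "b \<in> A" "a \<noteq> b"
  shows "prod f A = f a * f b * prod f (A - {a, b})"
proof -
  have "prod f A = f a * prod f (A - {a})" using assms by (simp add: prod.remove)
  also have "prod f (A - {a}) = f b * prod f (A - {a} - {b})" using assms by (intro prod.remove) auto
  also have "A - {a} - {b} = A - {a, b}" by auto
  finally show ?thesis by (simp add: mult_ac)
qed

lemma L_weight:
  assumes K: "K \<ge> 0" and C: "Csum n s x" and P: "\<forall>j\<in>W1 K s. x j \<ge> 1"
  shows "(\<Prod>i\<in>W2 K s. geo p (Lmap n s x i)) = (\<Prod>j\<in>W1 K s. geo p (x j))"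
proof -
  have P': "x j \<ge> 1" if "-1-K \<le> j" "j \<le> int s + K" for j using P that by (auto simp: W1_def)
  have x0: "x 0 \<ge> 1" "x (-1) \<ge> 1" "x (int s) \<ge> 1" using P' K by auto
  show ?thesis
  proof (cases "s = 0")
    case True
    have W: "W2 K s = W1 K s" using True by (simp add: W1_def W2_def)
    have fin: "finite (W1 K s)" by (simp add: W1_def)
    have in1: "-1 \<in> W1 K s" "0 \<in> W1 K s" using K by (auto simp: W1_def)
    have "(\<Prod>i\<in>W2 K s. geo p (Lmap n s x i)) = geo p (Lmap n s x (-1)) * geo p (Lmap n s x 0) *
        (\<Prod>i\<in>W1 K s - {-1, 0}. geo p (Lmap n s x i))"
      unfolding W by (rule prod_remove2[OF fin in1]) simp
    also have "(\<Prod>i\<in>W1 K s - {-1, 0}. geo p (Lmap n s x i)) = (\<Prod>i\<in>W1 K s - {-1, 0}. geo p (x i))"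
      using True by (intro prod.cong refl) (auto simp: Lmap_def)
    also have "geo p (Lmap n s x (-1)) * geo p (Lmap n s x 0) = geo p (x (-1)) * geo p (x 0)"
      using True C x0 by (intro geo2) (auto simp: Lmap_def Csum_def)
    also have "geo p (x (-1)) * geo p (x 0) * (\<Prod>i\<in>W1 K s - {-1, 0}. geo p (x i)) = (\<Prod>j\<in>W1 K s. geo p (x j))"
      by (rule prod_remove2[OF fin in1, symmetric]) simp
    finally show ?thesis .
  next
    case False
    then have s1: "int s \<ge> 1" by simp
    have fin1: "finite (W1 K s)" by (simp add: W1_def)
    have fin2: "finite (W2 K s)" by (simp add: W2_def)
    have in1: "-1 \<in> W1 K s" "0 \<in> W1 K s" "int s \<in> W1 K s" using K by (auto simp: W1_def)
    have in2: "-int s - 1 \<in> W2 K s" "-1 \<in> W2 K s" "0 \<in> W2 K s" using K s1 by (auto simp: W2_def)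
    let ?f = "\<lambda>i. geo p (Lmap n s x i)"
    have "(\<Prod>i\<in>W2 K s. ?f i) = ?f (-int s - 1) * ?f (-1) * ?f 0 * (\<Prod>i\<in>W2 K s - {-int s - 1, -1, 0}. ?f i)"
      by (rule prod_remove3[OF fin2 in2]) (use s1 in auto)
    also have "(\<Prod>i\<in>W2 K s - {-int s - 1, -1, 0}. ?f i) = (\<Prod>j\<in>W1 K s - {-1, 0, int s}. geo p (x j))"
    proof (rule prod.reindex_bij_witness[where j="\<lambda>i. if -int s \<le> i \<and> i \<le> -2 then i + int s + 1 else i + int s"
          and i="\<lambda>j. if 1 \<le> j \<and> j \<le> int s - 1 then j - int s - 1 else j - int s"])
      fix a assume "a \<in> W2 K s - {-int s - 1, -1, 0}"
      then show "geo p (x (if -int s \<le> a \<and> a \<le> -2 then a + int s + 1 else a + int s)) = ?f a"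
        using s1 by (auto simp: W2_def Lmap_def Let_def add_ac)
    qed (use s1 K in \<open>auto simp: W1_def W2_def\<close>)
    also have "?f (-int s - 1) * ?f (-1) * ?f 0 = geo p (x (-1)) * geo p (x 0) * geo p (x (int s))"
    proof -
      have S: "(\<Sum>j\<in>{0..int s}. x j) = (\<Sum>j\<in>{0..int s - 1}. x j) + x (int s)"
        using s1 by (subst sum_ivl_last) auto
      show ?thesis using s1 C x0 S by (intro geo3) (auto simp: Lmap_def Csum_def)
    qed
    also have "geo p (x (-1)) * geo p (x 0) * geo p (x (int s)) * (\<Prod>j\<in>W1 K s - {-1, 0, int s}. geo p (x j))
        = (\<Prod>j\<in>W1 K s. geo p (x j))"
      by (rule prod_remove3[OF fin1 in1, symmetric]) (use s1 in auto)
    finally show ?thesis .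
  qed
qed

definition S1set :: "nat \<Rightarrow> nat \<Rightarrow> int \<Rightarrow> int set \<Rightarrow> (int \<Rightarrow> int) \<Rightarrow> (int \<Rightarrow> int) set" where
  "S1set n s K J a = {x \<in> PiE (W1 K s) (\<lambda>_. UNIV). (\<forall>j\<in>W1 K s. x j \<ge> 1) \<and> Csum n s x \<and> (\<forall>j\<in>J. Lmap n s x j = a j)}"

definition S2set :: "nat \<Rightarrow> nat \<Rightarrow> int \<Rightarrow> int set \<Rightarrow> (int \<Rightarrow> int) \<Rightarrow> (int \<Rightarrow> int) set" where
  "S2set n s K J a = {y \<in> PiE (W2 K s) (\<lambda>_. UNIV). (\<forall>i\<in>W2 K s. y i \<ge> 1) \<and> Dsum n s y \<and> (\<forall>j\<in>J. y j = a j)}"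

lemma block_bij:
  assumes K: "K \<ge> 0" and J: "J \<subseteq> {-K..K}"
  shows "bij_betw (\<lambda>x. restrict (Lmap n s x) (W2 K s)) (S1set n s K J a) (S2set n s K J a)"
proof (rule bij_betw_byWitness[where f'="\<lambda>y. restrict (Linv n s y) (W1 K s)"])
  have JW: "J \<subseteq> W2 K s" using J by (auto simp: W2_def)
  have in1: "0 \<in> W1 K s" "-1 \<in> W1 K s" using K by (auto simp: W1_def)
  have in2: "0 \<in> W2 K s" "-1 \<in> W2 K s" using K by (auto simp: W2_def)
  have sub1: "{0..int s} \<subseteq> W1 K s" using K by (auto simp: W1_def)
  have sub2: "{-int s - 1..-1} \<subseteq> W2 K s" using K by (auto simp: W2_def)
  show "\<forall>x\<in>S1set n s K J a. restrict (Linv n s (restrict (Lmap n s x) (W2 K s))) (W1 K s) = x"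
  proof
    fix x assume x: "x \<in> S1set n s K J a"
    show "restrict (Linv n s (restrict (Lmap n s x) (W2 K s))) (W1 K s) = x"
    proof (rule PiE_ext[of _ "W1 K s" "\<lambda>_. UNIV"])
      show "x \<in> PiE (W1 K s) (\<lambda>_. UNIV)" using x by (simp add: S1set_def)
      fix j assume j: "j \<in> W1 K s"
      have "Linv n s (restrict (Lmap n s x) (W2 K s)) j = Linv n s (Lmap n s x) j"
        by (rule Linv_local[OF K j]) simp
      then show "restrict (Linv n s (restrict (Lmap n s x) (W2 K s))) (W1 K s) j = x j"
        using j by (simp add: Linv_L)
    qed simp
  qed
  show "\<forall>y\<in>S2set n s K J a. restrict (Lmap n s (restrict (Linv n s y) (W1 K s))) (W2 K s) = y"
  proof
    fix y assume y: "y \<in> S2set n s K J a"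
    show "restrict (Lmap n s (restrict (Linv n s y) (W1 K s))) (W2 K s) = y"
    proof (rule PiE_ext[of _ "W2 K s" "\<lambda>_. UNIV"])
      show "y \<in> PiE (W2 K s) (\<lambda>_. UNIV)" using y by (simp add: S2set_def)
      fix i assume i: "i \<in> W2 K s"
      have "Lmap n s (restrict (Linv n s y) (W1 K s)) i = Lmap n s (Linv n s y) i"
        by (rule L_local[OF K i]) simp
      then show "restrict (Lmap n s (restrict (Linv n s y) (W1 K s))) (W2 K s) i = y i"
        using i by (simp add: L_Linv)
    qed simp
  qed
  show "(\<lambda>x. restrict (Lmap n s x) (W2 K s)) ` S1set n s K J a \<subseteq> S2set n s K J a"
  proof (rule image_subsetI)
    fix x assume x: "x \<in> S1set n s K J a"
    then have C: "Csum n s x" and P: "\<forall>j\<in>W1 K s. x j \<ge> 1" and A: "\<forall>j\<in>J. Lmap n s x j = a j"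
      by (auto simp: S1set_def)
    have D: "Dsum n s (Lmap n s x)" using L_D[OF C] P in1 by auto
    have "Dsum n s (restrict (Lmap n s x) (W2 K s)) = Dsum n s (Lmap n s x)"
      by (rule Dsum_local) (use sub2 in auto)
    moreover have "\<forall>i\<in>W2 K s. Lmap n s x i \<ge> 1" using L_pos[OF K C P] by auto
    ultimately show "restrict (Lmap n s x) (W2 K s) \<in> S2set n s K J a"
      using D A JW by (auto simp: S2set_def)
  qed
  show "(\<lambda>y. restrict (Linv n s y) (W1 K s)) ` S2set n s K J a \<subseteq> S1set n s K J a"
  proof (rule image_subsetI)
    fix y assume y: "y \<in> S2set n s K J a"
    then have D: "Dsum n s y" and P: "\<forall>i\<in>W2 K s. y i \<ge> 1" and A: "\<forall>j\<in>J. y j = a j"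
      by (auto simp: S2set_def)
    have C: "Csum n s (Linv n s y)" using Linv_C[OF D] P in2 by auto
    have "Csum n s (restrict (Linv n s y) (W1 K s)) = Csum n s (Linv n s y)"
      by (rule Csum_local) (use sub1 in auto)
    moreover have "\<forall>j\<in>W1 K s. Linv n s y j \<ge> 1" using Linv_pos[OF K D P] by auto
    moreover have "\<forall>j\<in>J. Lmap n s (restrict (Linv n s y) (W1 K s)) j = a j"
    proof
      fix j assume j: "j \<in> J"
      have "Lmap n s (restrict (Linv n s y) (W1 K s)) j = Lmap n s (Linv n s y) j"
        by (rule L_local[OF K]) (use j JW in auto)
      then show "Lmap n s (restrict (Linv n s y) (W1 K s)) j = a j" using A j by (simp add: L_Linv)
    qed
    ultimately show "restrict (Linv n s y) (W1 K s) \<in> S1set n s K J a"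
      using C by (auto simp: S1set_def)
  qed
qed

lemma block_integral:
  assumes K: "K \<ge> 0" and J: "J \<subseteq> {-K..K}"
  shows "(\<integral>\<^sup>+x. ennreal (\<Prod>j\<in>W1 K s. geo p (x j)) \<partial>count_space (S1set n s K J a))
       = (\<integral>\<^sup>+y. ennreal (\<Prod>i\<in>W2 K s. geo p (y i)) \<partial>count_space (S2set n s K J a))"
proof -
  have "(\<integral>\<^sup>+x. ennreal (\<Prod>j\<in>W1 K s. geo p (x j)) \<partial>count_space (S1set n s K J a))
      = (\<integral>\<^sup>+x. ennreal (\<Prod>i\<in>W2 K s. geo p (restrict (Lmap n s x) (W2 K s) i)) \<partial>count_space (S1set n s K J a))"
  proof (rule nn_integral_cong)
    fix x assume "x \<in> space (count_space (S1set n s K J a))"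
    then have x: "x \<in> S1set n s K J a" by simp
    have "(\<Prod>i\<in>W2 K s. geo p (restrict (Lmap n s x) (W2 K s) i)) = (\<Prod>i\<in>W2 K s. geo p (Lmap n s x i))"
      by (rule prod.cong) auto
    also have "\<dots> = (\<Prod>j\<in>W1 K s. geo p (x j))"
      using x by (intro L_weight[OF K]) (auto simp: S1set_def)
    finally show "ennreal (\<Prod>j\<in>W1 K s. geo p (x j)) = ennreal (\<Prod>i\<in>W2 K s. geo p (restrict (Lmap n s x) (W2 K s) i))"
      by simp
  qed
  also have "\<dots> = (\<integral>\<^sup>+y. ennreal (\<Prod>i\<in>W2 K s. geo p (y i)) \<partial>count_space (S2set n s K J a))"
    by (rule nn_integral_bij_count_space[OF block_bij[OF K J]])
  finally show ?thesis .
qed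

lemma psum_mono:
  fixes g :: "int \<Rightarrow> int"
  assumes P: "\<forall>j\<in>{0..int n}. g j \<ge> 1" and "s \<le> s'" "s' \<le> n"
  shows "(\<Sum>j\<in>{0..int s}. g j) \<le> (\<Sum>j\<in>{0..int s'}. g j)"
proof (rule sum_mono2)
  fix b assume "b \<in> {0..int s'} - {0..int s}"
  then have "b \<in> {0..int n}" using assms(3) by auto
  then show "0 \<le> g b" using P by fastforce
qed (use assms in auto)

lemma psum_big:
  fixes g :: "int \<Rightarrow> int"
  assumes P: "\<forall>j\<in>{0..int n}. g j \<ge> 1"
  shows "int n < (\<Sum>j\<in>{0..int n}. g j)"
proof -
  have "(\<Sum>j\<in>{0..int n}. (1::int)) \<le> (\<Sum>j\<in>{0..int n}. g j)" using P by (intro sum_mono) auto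
  then show ?thesis by simp
qed

lemma Csum_least:
  fixes g :: "int \<Rightarrow> int"
  assumes P: "\<forall>j\<in>{0..int n}. g j \<ge> 1"
  defines "s0 \<equiv> (LEAST s::nat. (\<Sum>j\<in>{0..int s}. g j) > int n)"
  shows "s0 \<le> n" "Csum n s0 g" "\<And>s. s \<le> n \<Longrightarrow> Csum n s g \<Longrightarrow> s = s0"
proof -
  let ?P = "\<lambda>s::nat. (\<Sum>j\<in>{0..int s}. g j) > int n"
  have Pn: "?P n" using psum_big[OF P] .
  show s0n: "s0 \<le> n" unfolding s0_def by (rule Least_le[of ?P, OF Pn])
  have Ps0: "?P s0" unfolding s0_def by (rule LeastI[of ?P, OF Pn])
  have notP: "\<not> ?P s" if "s < s0" for s using not_less_Least[of s ?P] that unfolding s0_def by blast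
  show "Csum n s0 g"
  proof (cases "s0 = 0")
    case True
    then show ?thesis using Ps0 by (simp add: Csum_def)
  next
    case False
    then have "\<not> ?P (s0 - 1)" by (intro notP) simp
    moreover have "int (s0 - 1) = int s0 - 1" using False by simp
    ultimately show ?thesis using Ps0 by (simp add: Csum_def)
  qed
  fix s assume sn: "s \<le> n" and C: "Csum n s g"
  have Ps: "?P s" using C by (simp add: Csum_def)
  have "s0 \<le> s" unfolding s0_def by (rule Least_le[of ?P, OF Ps])
  moreover have "\<not> s0 < s"
  proof
    assume lt: "s0 < s"
    have "(\<Sum>j\<in>{0..int s0}. g j) \<le> (\<Sum>j\<in>{0..int (s - 1)}. g j)"
      using lt sn by (intro psum_mono[OF P]) auto
    moreover have "int (s - 1) = int s - 1" using lt by simp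
    ultimately show False using Ps0 C by (simp add: Csum_def)
  qed
  ultimately show "s = s0" by simp
qed

lemma Csum_sidx:
  assumes P: "\<forall>j\<in>{0..int n}. g j \<ge> 1" and "s \<le> n" "Csum n s g"
  shows "nat (s_idx n g) = s"
  using Csum_least(3)[OF P assms(2,3)] by (simp add: s_idx_def)

lemma Csum_ex:
  assumes P: "\<forall>j\<in>{0..int n}. g j \<ge> 1"
  shows "\<exists>s\<le>n. Csum n s g"
  using Csum_least(1,2)[OF P] by blast

lemma Csum_uniq:
  assumes P: "\<forall>j\<in>{0..int n}. g j \<ge> 1" and "s \<le> n" "Csum n s g" "s' \<le> n" "Csum n s' g"
  shows "s = s'"
  using Csum_least(3)[OF P assms(2,3)] Csum_least(3)[OF P assms(4,5)] by simp

lemma Dsum_refl: "Dsum n s y = Csum n s (\<lambda>j. y (-1-j))"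
proof -
  have e: "(\<Sum>i\<in>{-b..-1}. y i) = (\<Sum>j\<in>{0..b-1}. y (-1-j))" for b :: int
    by (rule sum.reindex_bij_witness[where i="\<lambda>i. -1-i" and j="\<lambda>j. -1-j"]) auto
  have e2: "(\<Sum>i\<in>{-int s-1..-1}. y i) = (\<Sum>j\<in>{0..int s}. y (-1-j))"
    using e[of "int s + 1"] by simp
  show ?thesis using e[of "int s"] e2 by (simp add: Dsum_def Csum_def)
qed

lemma Dsum_ex:
  assumes P: "\<forall>i\<in>{-int n-1..-1}. y i \<ge> 1"
  shows "\<exists>s\<le>n. Dsum n s y"
proof -
  have "\<forall>j\<in>{0..int n}. (\<lambda>j. y (-1-j)) j \<ge> 1" using P by auto
  from Csum_ex[OF this] show ?thesis by (simp add: Dsum_refl)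
qed

lemma Dsum_uniq:
  assumes P: "\<forall>i\<in>{-int n-1..-1}. y i \<ge> 1" and "s \<le> n" "Dsum n s y" "s' \<le> n" "Dsum n s' y"
  shows "s = s'"
proof -
  have "\<forall>j\<in>{0..int n}. (\<lambda>j. y (-1-j)) j \<ge> 1" using P by auto
  from Csum_uniq[OF this] assms(2-5) show ?thesis by (simp add: Dsum_refl)
qed



lemma cyl_sets:
  fixes X :: "'a \<Rightarrow> int \<Rightarrow> int"
  assumes X: "\<And>j. (\<lambda>\<omega>. X \<omega> j) \<in> M \<rightarrow>\<^sub>M count_space UNIV" and V: "finite V"
  shows "{\<omega>\<in>space M. \<forall>j\<in>V. X \<omega> j = a j} \<in> sets M"
proof -
  have "{\<omega>\<in>space M. X \<omega> j = a j} \<in> sets M" for j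
  proof -
    have "{\<omega>\<in>space M. X \<omega> j = a j} = (\<lambda>\<omega>. X \<omega> j) -` {a j} \<inter> space M" by auto
    then show ?thesis using measurable_sets[OF X[of j], of "{a j}"] by simp
  qed
  note Xs = this
  show ?thesis
  proof (cases "V = {}")
    case True
    then show ?thesis by simp
  next
    case False
    have "{\<omega>\<in>space M. \<forall>j\<in>V. X \<omega> j = a j} = (\<Inter>j\<in>V. {\<omega>\<in>space M. X \<omega> j = a j})"
      using False by auto
    also have "\<dots> \<in> sets M" by (rule sets.finite_INT[OF V False Xs])
    finally show ?thesis .
  qed
qed

lemma cyl_decomp:
  fixes X :: "'a \<Rightarrow> int \<Rightarrow> int"
  assumes X: "\<And>j. (\<lambda>\<omega>. X \<omega> j) \<in> M \<rightarrow>\<^sub>M count_space UNIV" and V: "finite V"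
    and S: "S \<subseteq> PiE V (\<lambda>_. UNIV)"
  shows "emeasure M {\<omega>\<in>space M. restrict (X \<omega>) V \<in> S}
      = (\<integral>\<^sup>+a. emeasure M {\<omega>\<in>space M. \<forall>j\<in>V. X \<omega> j = a j} \<partial>count_space S)"
proof -
  have cS: "countable S"
  proof -
    have "countable (PiE V (\<lambda>_. UNIV::int set))" by (rule countable_PiE[OF V]) simp
    then show ?thesis by (rule countable_subset[OF S])
  qed
  have eq: "{\<omega>\<in>space M. restrict (X \<omega>) V \<in> S} = (\<Union>a\<in>S. {\<omega>\<in>space M. \<forall>j\<in>V. X \<omega> j = a j})"
  proof (intro equalityI subsetI)
    fix \<omega> assume "\<omega> \<in> {\<omega>\<in>space M. restrict (X \<omega>) V \<in> S}"
    then show "\<omega> \<in> (\<Union>a\<in>S. {\<omega>\<in>space M. \<forall>j\<in>V. X \<omega> j = a j})" by (intro UN_I[of "restrict (X \<omega>) V"]) auto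
  next
    fix \<omega> assume "\<omega> \<in> (\<Union>a\<in>S. {\<omega>\<in>space M. \<forall>j\<in>V. X \<omega> j = a j})"
    then obtain a where a: "a \<in> S" "\<omega> \<in> space M" "\<forall>j\<in>V. X \<omega> j = a j" by auto
    have aP: "a \<in> PiE V (\<lambda>_. UNIV)" using a(1) S by blast
    have "restrict (X \<omega>) V = a"
      by (rule PiE_ext[OF _ aP]) (use a(3) in auto)
    then show "\<omega> \<in> {\<omega>\<in>space M. restrict (X \<omega>) V \<in> S}" using a by auto
  qed
  show ?thesis unfolding eq
  proof (rule emeasure_UN_countable)
    show "disjoint_family_on (\<lambda>a. {\<omega>\<in>space M. \<forall>j\<in>V. X \<omega> j = a j}) S"
      unfolding disjoint_family_on_def
    proof (intro ballI impI)
      fix a b assume ab: "a \<in> S" "b \<in> S" "a \<noteq> b"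
      have aP: "a \<in> PiE V (\<lambda>_. UNIV)" "b \<in> PiE V (\<lambda>_. UNIV)" using ab S by blast+
      have "\<exists>j\<in>V. a j \<noteq> b j"
      proof (rule ccontr)
        assume "\<not> (\<exists>j\<in>V. a j \<noteq> b j)"
        then have "a = b" by (intro PiE_ext[OF aP]) auto
        with ab show False by simp
      qed
      then obtain j where "j \<in> V" "a j \<noteq> b j" by blast
      then show "{\<omega>\<in>space M. \<forall>j\<in>V. X \<omega> j = a j} \<inter> {\<omega>\<in>space M. \<forall>j\<in>V. X \<omega> j = b j} = {}" by auto
    qed
  next
    show "countable S" by (fact cS)
  next
    fix a assume "a \<in> S" show "{\<omega>\<in>space M. \<forall>j\<in>V. X \<omega> j = a j} \<in> sets M" by (rule cyl_sets[OF X V])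
  qed
qed


lemma countable_PiE_int: "finite V \<Longrightarrow> S \<subseteq> PiE V (\<lambda>_. UNIV::int set) \<Longrightarrow> countable S"
proof -
  assume V: "finite V" and S: "S \<subseteq> PiE V (\<lambda>_. UNIV::int set)"
  have "countable (PiE V (\<lambda>_. UNIV::int set))" by (rule countable_PiE[OF V]) simp
  then show ?thesis by (rule countable_subset[OF S])
qed

lemma cyl_eq:
  fixes X :: "'a \<Rightarrow> int \<Rightarrow> int"
  assumes S: "S \<subseteq> PiE V (\<lambda>_. UNIV)"
  shows "{\<omega>\<in>space M. restrict (X \<omega>) V \<in> S} = (\<Union>a\<in>S. {\<omega>\<in>space M. \<forall>j\<in>V. X \<omega> j = a j})"
proof (intro equalityI subsetI)
  fix \<omega> assume "\<omega> \<in> {\<omega>\<in>space M. restrict (X \<omega>) V \<in> S}"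
  then show "\<omega> \<in> (\<Union>a\<in>S. {\<omega>\<in>space M. \<forall>j\<in>V. X \<omega> j = a j})" by (intro UN_I[of "restrict (X \<omega>) V"]) auto
next
  fix \<omega> assume "\<omega> \<in> (\<Union>a\<in>S. {\<omega>\<in>space M. \<forall>j\<in>V. X \<omega> j = a j})"
  then obtain a where a: "a \<in> S" "\<omega> \<in> space M" "\<forall>j\<in>V. X \<omega> j = a j" by auto
  have aP: "a \<in> PiE V (\<lambda>_. UNIV)" using a(1) S by blast
  have "restrict (X \<omega>) V = a"
    by (rule PiE_ext[OF _ aP]) (use a(3) in auto)
  then show "\<omega> \<in> {\<omega>\<in>space M. restrict (X \<omega>) V \<in> S}" using a by auto
qed

lemma fin_sets:
  fixes X :: "'a \<Rightarrow> int \<Rightarrow> int"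
  assumes X: "\<And>j. (\<lambda>\<omega>. X \<omega> j) \<in> M \<rightarrow>\<^sub>M count_space UNIV" and V: "finite V"
    and S: "S \<subseteq> PiE V (\<lambda>_. UNIV)"
  shows "{\<omega>\<in>space M. restrict (X \<omega>) V \<in> S} \<in> sets M"
  unfolding cyl_eq[OF S]
  by (rule sets.countable_UN'[OF countable_PiE_int[OF V S]]) (intro image_subsetI cyl_sets[OF X V])

lemma loc_sets:
  fixes X :: "'a \<Rightarrow> int \<Rightarrow> int"
  assumes X: "\<And>j. (\<lambda>\<omega>. X \<omega> j) \<in> M \<rightarrow>\<^sub>M count_space UNIV" and V: "finite V"
    and Q: "\<And>g. Q (restrict g V) = Q g"
  shows "{\<omega>\<in>space M. Q (X \<omega>)} \<in> sets M"
proof -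
  have "{\<omega>\<in>space M. Q (X \<omega>)} = {\<omega>\<in>space M. restrict (X \<omega>) V \<in> {x \<in> PiE V (\<lambda>_. UNIV). Q x}}"
    using Q by auto
  also have "\<dots> \<in> sets M" by (rule fin_sets[OF X V]) auto
  finally show ?thesis .
qed

lemma law_transfer:
  fixes X :: "'a \<Rightarrow> int \<Rightarrow> int" and Y :: "'b \<Rightarrow> int \<Rightarrow> int"
  assumes X: "\<And>j. (\<lambda>\<omega>. X \<omega> j) \<in> M \<rightarrow>\<^sub>M count_space UNIV"
    and Y: "\<And>j. (\<lambda>\<omega>. Y \<omega> j) \<in> N \<rightarrow>\<^sub>M count_space UNIV" and V: "finite V"
    and eq: "\<And>a. emeasure M {\<omega>\<in>space M. \<forall>j\<in>V. X \<omega> j = a j} = emeasure N {\<omega>\<in>space N. \<forall>j\<in>V. Y \<omega> j = a j}"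
    and S: "S \<subseteq> PiE V (\<lambda>_. UNIV)"
  shows "emeasure M {\<omega>\<in>space M. restrict (X \<omega>) V \<in> S} = emeasure N {\<omega>\<in>space N. restrict (Y \<omega>) V \<in> S}"
  unfolding cyl_decomp[OF X V S] cyl_decomp[OF Y V S] eq ..

lemma seq_meas:
  fixes X :: "'a \<Rightarrow> int \<Rightarrow> int"
  assumes X: "\<And>j. (\<lambda>\<omega>. X \<omega> j) \<in> M \<rightarrow>\<^sub>M count_space UNIV"
  shows "X \<in> M \<rightarrow>\<^sub>M Pi\<^sub>M UNIV (\<lambda>_. count_space UNIV)"
proof -
  have "(\<lambda>\<omega> i. X \<omega> i) \<in> M \<rightarrow>\<^sub>M Pi\<^sub>M UNIV (\<lambda>_. count_space UNIV)"
    by (rule measurable_PiM_single') (use X in auto)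
  then show ?thesis by simp
qed

lemma emb_vimage:
  fixes X :: "'a \<Rightarrow> int \<Rightarrow> int"
  shows "X -` prod_emb UNIV (\<lambda>_. count_space UNIV) J (PiE J A) \<inter> space M
     = {\<omega>\<in>space M. restrict (X \<omega>) J \<in> PiE J A}"
  by (auto simp: prod_emb_def)

lemma seq_law_eqI:
  fixes X :: "'a \<Rightarrow> int \<Rightarrow> int" and Y :: "'b \<Rightarrow> int \<Rightarrow> int"
  assumes PM: "prob_space M" and PN: "prob_space N"
    and X: "\<And>j. (\<lambda>\<omega>. X \<omega> j) \<in> M \<rightarrow>\<^sub>M count_space UNIV"
    and Y: "\<And>j. (\<lambda>\<omega>. Y \<omega> j) \<in> N \<rightarrow>\<^sub>M count_space UNIV"
    and eq: "\<And>J a. finite J \<Longrightarrow> measure M {\<omega>\<in>space M. \<forall>j\<in>J. X \<omega> j = a j} = measure N {\<omega>\<in>space N. \<forall>j\<in>J. Y \<omega> j = a j}"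
  shows "seq_law M X = seq_law N Y"
  unfolding seq_law_def
proof (rule measure_eqI_PiM_infinite)
  show "sets (distr M (Pi\<^sub>M UNIV (\<lambda>_. count_space UNIV)) X) = sets (Pi\<^sub>M UNIV (\<lambda>_. count_space UNIV))" by simp
  show "sets (distr N (Pi\<^sub>M UNIV (\<lambda>_. count_space UNIV)) Y) = sets (Pi\<^sub>M UNIV (\<lambda>_. count_space UNIV))" by simp
  show "finite_measure (distr M (Pi\<^sub>M UNIV (\<lambda>_. count_space UNIV)) X)"
    using prob_space.prob_space_distr[OF PM seq_meas[where X=X, OF X]] unfolding prob_space_def by blast
  fix A :: "int \<Rightarrow> int set" and J :: "int set"
  assume J: "finite J"
  have emb: "prod_emb UNIV (\<lambda>_. count_space UNIV) J (PiE J A) \<in> sets (Pi\<^sub>M UNIV (\<lambda>_::int. count_space (UNIV::int set)))"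
    by (rule sets_PiM_I) (use J in auto)
  have eqE: "emeasure M {\<omega>\<in>space M. \<forall>j\<in>J. X \<omega> j = a j} = emeasure N {\<omega>\<in>space N. \<forall>j\<in>J. Y \<omega> j = a j}" for a
  proof -
    have FM: "finite_measure M" "finite_measure N" using PM PN unfolding prob_space_def by blast+
    show ?thesis using eq[OF J, of a] by (simp add: finite_measure.emeasure_eq_measure[OF FM(1)] finite_measure.emeasure_eq_measure[OF FM(2)])
  qed
  have "emeasure (distr M (Pi\<^sub>M UNIV (\<lambda>_. count_space UNIV)) X) (prod_emb UNIV (\<lambda>_. count_space UNIV) J (PiE J A))
      = emeasure M {\<omega>\<in>space M. restrict (X \<omega>) J \<in> PiE J (\<lambda>j. A j \<inter> UNIV)}"
    by (simp add: emeasure_distr[OF seq_meas[where X=X, OF X] emb] emb_vimage)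
  also have "\<dots> = emeasure N {\<omega>\<in>space N. restrict (Y \<omega>) J \<in> PiE J (\<lambda>j. A j \<inter> UNIV)}"
    by (rule law_transfer[OF X Y J eqE]) auto
  also have "\<dots> = emeasure (distr N (Pi\<^sub>M UNIV (\<lambda>_. count_space UNIV)) Y) (prod_emb UNIV (\<lambda>_. count_space UNIV) J (PiE J A))"
    by (simp add: emeasure_distr[OF seq_meas[where X=Y, OF Y] emb] emb_vimage)
  finally show "emeasure (distr M (Pi\<^sub>M UNIV (\<lambda>_. count_space UNIV)) X) (prod_emb UNIV (\<lambda>_. count_space UNIV) J (PiE J A))
      = emeasure (distr N (Pi\<^sub>M UNIV (\<lambda>_. count_space UNIV)) Y) (prod_emb UNIV (\<lambda>_. count_space UNIV) J (PiE J A))" .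
qed

lemma seq_law_points:
  fixes X :: "'a \<Rightarrow> int \<Rightarrow> int" and Y :: "'b \<Rightarrow> int \<Rightarrow> int"
  assumes X: "\<And>j. (\<lambda>\<omega>. X \<omega> j) \<in> M \<rightarrow>\<^sub>M count_space UNIV"
    and Y: "\<And>j. (\<lambda>\<omega>. Y \<omega> j) \<in> N \<rightarrow>\<^sub>M count_space UNIV"
    and L: "seq_law M X = seq_law N Y" and J: "finite J"
  shows "measure M {\<omega>\<in>space M. \<forall>j\<in>J. X \<omega> j = a j} = measure N {\<omega>\<in>space N. \<forall>j\<in>J. Y \<omega> j = a j}"
proof -
  let ?E = "prod_emb UNIV (\<lambda>_. count_space UNIV) J (PiE J (\<lambda>j. {a j}))"
  have emb: "?E \<in> sets (Pi\<^sub>M UNIV (\<lambda>_::int. count_space (UNIV::int set)))"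
    by (rule sets_PiM_I) (use J in auto)
  have e: "Z -` ?E \<inter> space M = {\<omega>\<in>space M. \<forall>j\<in>J. Z \<omega> j = a j}"
    for Z :: "'c \<Rightarrow> int \<Rightarrow> int" and M by (auto simp: prod_emb_def PiE_iff)
  have "measure M {\<omega>\<in>space M. \<forall>j\<in>J. X \<omega> j = a j} = measure (seq_law M X) ?E"
    unfolding seq_law_def measure_distr[OF seq_meas[where X=X, OF X] emb] e ..
  also have "\<dots> = measure (seq_law N Y) ?E" by (simp add: L)
  also have "\<dots> = measure N {\<omega>\<in>space N. \<forall>j\<in>J. Y \<omega> j = a j}"
    unfolding seq_law_def measure_distr[OF seq_meas[where X=Y, OF Y] emb] e ..
  finally show ?thesis .
qed



definition pointlaw :: "'a measure \<Rightarrow> real \<Rightarrow> (int \<Rightarrow> 'a \<Rightarrow> int) \<Rightarrow> int set \<Rightarrow> bool" where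
  "pointlaw M p G I \<longleftrightarrow> (\<forall>V a. finite V \<longrightarrow> V \<subseteq> I \<longrightarrow>
     measure M {\<omega>\<in>space M. \<forall>j\<in>V. G j \<omega> = a j} = (\<Prod>j\<in>V. geo p (a j)))"

lemma SetLaw:
  fixes G :: "int \<Rightarrow> 'a \<Rightarrow> int"
  assumes PM: "prob_space M" and G: "\<And>i. G i \<in> M \<rightarrow>\<^sub>M count_space UNIV" and PL: "pointlaw M p G I"
    and V: "finite V" "V \<subseteq> I" and S: "S \<subseteq> PiE V (\<lambda>_. UNIV)"
  shows "emeasure M {\<omega>\<in>space M. restrict (\<lambda>j. G j \<omega>) V \<in> S} = (\<integral>\<^sup>+x. ennreal (\<Prod>j\<in>V. geo p (x j)) \<partial>count_space S)"
proof -
  have GX: "\<And>j. (\<lambda>\<omega>. (\<lambda>j. G j \<omega>) j) \<in> M \<rightarrow>\<^sub>M count_space UNIV" using G by simp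
  have FM: "finite_measure M" using PM unfolding prob_space_def by blast
  show ?thesis
    unfolding cyl_decomp[where X="\<lambda>\<omega> j. G j \<omega>", OF GX V(1) S]
  proof (rule nn_integral_cong)
    fix x
    show "emeasure M {\<omega> \<in> space M. \<forall>j\<in>V. G j \<omega> = x j} = ennreal (\<Prod>j\<in>V. geo p (x j))"
      using PL V by (simp add: finite_measure.emeasure_eq_measure[OF FM] pointlaw_def)
  qed
qed

lemma weight_zero: "finite V \<Longrightarrow> j \<in> V \<Longrightarrow> x j < 1 \<Longrightarrow> (\<Prod>j\<in>V. geo p (x j)) = 0"
  by (rule prod_zero) (auto simp: geo_def intro!: bexI[of _ j])

lemma prob_full:
  assumes PM: "prob_space M" and F: "F \<in> sets M" "measure M F = 1" and E: "E \<in> sets M"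
  shows "measure M (E \<inter> F) = measure M E"
proof -
  interpret prob_space M by fact
  have "prob (space M - F) = 0" using prob_compl[OF F(1)] F(2) by simp
  moreover have "prob (E - F) \<le> prob (space M - F)"
    using E F by (intro finite_measure_mono) (auto dest: sets.sets_into_space)
  ultimately have z: "prob (E - F) = 0" using measure_nonneg[of M "E - F"] by linarith
  have "(E \<inter> F) \<union> (E - F) = E" by blast
  then have "prob E = prob ((E \<inter> F) \<union> (E - F))" by simp
  also have "\<dots> = prob (E \<inter> F) + prob (E - F)"
    using E F by (intro finite_measure_Union) auto
  finally show ?thesis using z by simp
qed

lemma Pos_sets:
  fixes G :: "int \<Rightarrow> 'a \<Rightarrow> int"
  assumes G: "\<And>i. G i \<in> M \<rightarrow>\<^sub>M count_space UNIV" and W: "finite W"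
  shows "{\<omega>\<in>space M. \<forall>j\<in>W. G j \<omega> \<ge> 1} \<in> sets M"
proof -
  have GX: "\<And>j. (\<lambda>\<omega>. (\<lambda>j. G j \<omega>) j) \<in> M \<rightarrow>\<^sub>M count_space UNIV" using G by simp
  show ?thesis using loc_sets[where X="\<lambda>\<omega> j. G j \<omega>" and Q="\<lambda>g. \<forall>j\<in>W. g j \<ge> 1", OF GX W] by simp
qed

lemma Pos_full:
  fixes G :: "int \<Rightarrow> 'a \<Rightarrow> int"
  assumes PM: "prob_space M" and G: "\<And>i. G i \<in> M \<rightarrow>\<^sub>M count_space UNIV" and PL: "pointlaw M p G I"
    and W: "finite W" "W \<subseteq> I"
  shows "measure M {\<omega>\<in>space M. \<forall>j\<in>W. G j \<omega> \<ge> 1} = 1"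
proof -
  interpret prob_space M by fact
  let ?S = "{x \<in> PiE W (\<lambda>_. UNIV). \<not> (\<forall>j\<in>W. x j \<ge> 1)}"
  have GX: "\<And>j. (\<lambda>\<omega>. (\<lambda>j. G j \<omega>) j) \<in> M \<rightarrow>\<^sub>M count_space UNIV" using G by simp
  have e: "space M - {\<omega>\<in>space M. \<forall>j\<in>W. G j \<omega> \<ge> 1} = {\<omega>\<in>space M. restrict (\<lambda>j. G j \<omega>) W \<in> ?S}"
    by auto
  have "emeasure M {\<omega>\<in>space M. restrict (\<lambda>j. G j \<omega>) W \<in> ?S} = (\<integral>\<^sup>+x. ennreal (\<Prod>j\<in>W. geo p (x j)) \<partial>count_space ?S)"
    by (rule SetLaw[OF PM G PL W]) auto
  also have "\<dots> = 0"
  proof -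
    have z: "ennreal (\<Prod>j\<in>W. geo p (x j)) = 0" if "x \<in> ?S" for x
    proof -
      have "\<exists>j\<in>W. x j < 1" using that by (simp add: not_le)
      then obtain j where "j \<in> W" "x j < 1" by blast
      then show ?thesis using weight_zero[OF W(1)] by simp
    qed
    show ?thesis by (subst nn_integral_cong[where v="\<lambda>_. 0"]) (auto simp: z)
  qed
  finally have "emeasure M (space M - {\<omega>\<in>space M. \<forall>j\<in>W. G j \<omega> \<ge> 1}) = 0" unfolding e by simp
  then have "prob (space M - {\<omega>\<in>space M. \<forall>j\<in>W. G j \<omega> \<ge> 1}) = 0" by (simp add: emeasure_eq_measure)
  then show ?thesis using prob_compl[OF Pos_sets[OF G W(1)]] by simp
qed

lemma Phi_coord_meas:
  fixes G :: "int \<Rightarrow> 'a \<Rightarrow> int"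
  assumes G: "\<And>i. G i \<in> M \<rightarrow>\<^sub>M count_space UNIV"
  shows "(\<lambda>\<omega>. Phi n (\<lambda>j. G j \<omega>) i) \<in> M \<rightarrow>\<^sub>M count_space UNIV"
proof -
  have GX: "\<And>j. (\<lambda>\<omega>. (\<lambda>j. G j \<omega>) j) \<in> M \<rightarrow>\<^sub>M count_space UNIV" using G by simp
  have Lm: "(\<lambda>\<omega>. Lmap n s (\<lambda>j. G j \<omega>) i) \<in> M \<rightarrow>\<^sub>M count_space UNIV" for s
  proof (subst measurable_count_space_eq2_countable, intro conjI ballI)
    show "(\<lambda>\<omega>. Lmap n s (\<lambda>j. G j \<omega>) i) \<in> space M \<rightarrow> UNIV" by simp
    fix v
    have K: "\<bar>i\<bar> \<ge> 0" by simp
    have iW: "i \<in> W2 \<bar>i\<bar> s" by (auto simp: W2_def)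
    have "{\<omega>\<in>space M. Lmap n s (\<lambda>j. G j \<omega>) i = v} \<in> sets M"
    proof (rule loc_sets[where X="\<lambda>\<omega> j. G j \<omega>" and Q="\<lambda>g. Lmap n s g i = v", OF GX])
      show "finite (W1 \<bar>i\<bar> s)" by (simp add: W1_def)
      fix g :: "int \<Rightarrow> int"
      have "Lmap n s (restrict g (W1 \<bar>i\<bar> s)) i = Lmap n s g i" by (rule L_local[OF K iW]) simp
      then show "(Lmap n s (restrict g (W1 \<bar>i\<bar> s)) i = v) = (Lmap n s g i = v)" by simp
    qed
    moreover have "(\<lambda>\<omega>. Lmap n s (\<lambda>j. G j \<omega>) i) -` {v} \<inter> space M = {\<omega>\<in>space M. Lmap n s (\<lambda>j. G j \<omega>) i = v}" by auto
    ultimately show "(\<lambda>\<omega>. Lmap n s (\<lambda>j. G j \<omega>) i) -` {v} \<inter> space M \<in> sets M" by simp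
  qed
  have Pm: "(\<lambda>\<omega>. int n < (\<Sum>j\<in>{0..int s}. G j \<omega>)) \<in> M \<rightarrow>\<^sub>M count_space UNIV" for s :: nat
  proof (subst measurable_count_space_eq2_countable, intro conjI ballI)
    show "(\<lambda>\<omega>. int n < (\<Sum>j\<in>{0..int s}. G j \<omega>)) \<in> space M \<rightarrow> UNIV" by simp
    fix b :: bool
    have "{\<omega>\<in>space M. (int n < (\<Sum>j\<in>{0..int s}. G j \<omega>)) = b} \<in> sets M"
    proof (rule loc_sets[where X="\<lambda>\<omega> j. G j \<omega>" and Q="\<lambda>g. (int n < (\<Sum>j\<in>{0..int s}. g j)) = b", OF GX])
      show "finite {0..int s}" by simp
      fix g :: "int \<Rightarrow> int"
      have "(\<Sum>j\<in>{0..int s}. restrict g {0..int s} j) = (\<Sum>j\<in>{0..int s}. g j)" by (rule sum.cong) auto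
      then show "((int n < (\<Sum>j\<in>{0..int s}. restrict g {0..int s} j)) = b) = ((int n < (\<Sum>j\<in>{0..int s}. g j)) = b)" by simp
    qed
    moreover have "(\<lambda>\<omega>. int n < (\<Sum>j\<in>{0..int s}. G j \<omega>)) -` {b} \<inter> space M = {\<omega>\<in>space M. (int n < (\<Sum>j\<in>{0..int s}. G j \<omega>)) = b}" by auto
    ultimately show "(\<lambda>\<omega>. int n < (\<Sum>j\<in>{0..int s}. G j \<omega>)) -` {b} \<inter> space M \<in> sets M" by simp
  qed
  have Sm: "(\<lambda>\<omega>. nat (s_idx n (\<lambda>j. G j \<omega>))) \<in> M \<rightarrow>\<^sub>M count_space UNIV"
    unfolding s_idx_def nat_int by (rule measurable_Least[OF Pm])
  have "(\<lambda>\<omega>. Lmap n (nat (s_idx n (\<lambda>j. G j \<omega>))) (\<lambda>j. G j \<omega>) i) \<in> M \<rightarrow>\<^sub>M count_space UNIV"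
    by (rule measurable_compose_countable'[where I=UNIV, OF Lm Sm]) simp
  then show ?thesis by (simp add: Phi_Lmap)
qed



lemma S1_mem:
  assumes K: "K \<ge> 0" and J: "J \<subseteq> {-K..K}" and P: "\<forall>j\<in>W1 K s. x j \<ge> 1"
  shows "restrict x (W1 K s) \<in> S1set n s K J a \<longleftrightarrow> Csum n s x \<and> (\<forall>j\<in>J. Lmap n s x j = a j)"
proof -
  have C: "Csum n s (restrict x (W1 K s)) = Csum n s x"
    by (rule Csum_local) (use K in \<open>auto simp: W1_def\<close>)
  have L: "Lmap n s (restrict x (W1 K s)) j = Lmap n s x j" if "j \<in> J" for j
    by (rule L_local[OF K]) (use that J in \<open>auto simp: W2_def\<close>)
  show ?thesis using C L P by (auto simp: S1set_def)
qed

lemma S2_mem: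
  assumes K: "K \<ge> 0" and J: "J \<subseteq> {-K..K}" and P: "\<forall>i\<in>W2 K s. x i \<ge> 1"
  shows "restrict x (W2 K s) \<in> S2set n s K J a \<longleftrightarrow> Dsum n s x \<and> (\<forall>j\<in>J. x j = a j)"
proof -
  have D: "Dsum n s (restrict x (W2 K s)) = Dsum n s x"
    by (rule Dsum_local) (use K in \<open>auto simp: W2_def\<close>)
  have JW: "J \<subseteq> W2 K s" using J by (auto simp: W2_def)
  show ?thesis using D P JW by (auto simp: S2set_def)
qed

lemma bound_K: "finite J \<Longrightarrow> J \<subseteq> {-(\<Sum>j\<in>J. \<bar>j\<bar>)..(\<Sum>j\<in>J. \<bar>j\<bar>)}" for J :: "int set"
proof
  fix j assume "finite J" "j \<in> J"
  then have "\<bar>j\<bar> \<le> (\<Sum>j\<in>J. \<bar>j\<bar>)" by (intro member_le_sum) auto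
  then show "j \<in> {-(\<Sum>j\<in>J. \<bar>j\<bar>)..(\<Sum>j\<in>J. \<bar>j\<bar>)}" by auto
qed

theorem Phi_points:
  fixes G :: "int \<Rightarrow> 'a \<Rightarrow> int"
  assumes PM: "prob_space M" and G: "\<And>i. G i \<in> M \<rightarrow>\<^sub>M count_space UNIV"
    and PL: "pointlaw M p G UNIV" and J: "finite J"
  shows "measure M {\<omega>\<in>space M. \<forall>j\<in>J. Phi n (\<lambda>j. G j \<omega>) j = a j}
       = measure M {\<omega>\<in>space M. \<forall>j\<in>J. G j \<omega> = a j}"
proof -
  interpret prob_space M by fact
  define K where "K = (\<Sum>j\<in>J. \<bar>j\<bar>)"
  have K: "K \<ge> 0" unfolding K_def by (rule sum_nonneg) simp
  have JK: "J \<subseteq> {-K..K}" unfolding K_def by (rule bound_K[OF J])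
  define X where "X = (\<lambda>\<omega> j. G j \<omega>)"
  have GX: "\<And>j. (\<lambda>\<omega>. X \<omega> j) \<in> M \<rightarrow>\<^sub>M count_space UNIV" using G by (simp add: X_def)
  define W where "W = {-int n - 1 - K..int n + K}"
  have Wf: "finite W" by (simp add: W_def)
  define PosE where "PosE = {\<omega>\<in>space M. \<forall>j\<in>W. G j \<omega> \<ge> 1}"
  have PosS: "PosE \<in> sets M" unfolding PosE_def by (rule Pos_sets[OF G Wf])
  have Pos1: "prob PosE = 1" unfolding PosE_def by (rule Pos_full[OF PM G PL Wf]) simp
  define A where "A = {\<omega>\<in>space M. \<forall>j\<in>J. Phi n (X \<omega>) j = a j}"
  define B where "B = {\<omega>\<in>space M. \<forall>j\<in>J. X \<omega> j = a j}"
  have AS: "A \<in> sets M" unfolding A_def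
    by (rule cyl_sets[where X="\<lambda>\<omega>. Phi n (X \<omega>)", OF _ J]) (simp add: X_def Phi_coord_meas[OF G])
  have BS: "B \<in> sets M" unfolding B_def by (rule cyl_sets[OF GX J])
  define E1 where "E1 s = {\<omega>\<in>space M. restrict (X \<omega>) (W1 K s) \<in> S1set n s K J a} \<inter> PosE" for s
  define E2 where "E2 s = {\<omega>\<in>space M. restrict (X \<omega>) (W2 K s) \<in> S2set n s K J a} \<inter> PosE" for s
  have W1W: "W1 K s \<subseteq> W" if "s \<le> n" for s using that by (auto simp: W1_def W_def)
  have W2W: "W2 K s \<subseteq> W" if "s \<le> n" for s using that by (auto simp: W2_def W_def)
  have F1: "{\<omega>\<in>space M. restrict (X \<omega>) (W1 K s) \<in> S1set n s K J a} \<in> sets M" for s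
    by (rule fin_sets[OF GX]) (auto simp: W1_def S1set_def)
  have F2: "{\<omega>\<in>space M. restrict (X \<omega>) (W2 K s) \<in> S2set n s K J a} \<in> sets M" for s
    by (rule fin_sets[OF GX]) (auto simp: W2_def S2set_def)
  have E1S: "E1 s \<in> sets M" for s unfolding E1_def using F1 PosS by blast
  have E2S: "E2 s \<in> sets M" for s unfolding E2_def using F2 PosS by blast
  have posX: "\<forall>j\<in>V. X \<omega> j \<ge> 1" if "\<omega> \<in> PosE" "V \<subseteq> W" for \<omega> V
    using that by (auto simp: PosE_def X_def)
  have pos0: "\<forall>j\<in>{0..int n}. X \<omega> j \<ge> 1" if "\<omega> \<in> PosE" for \<omega>
  proof -
    have "{0..int n} \<subseteq> W" using K by (auto simp: W_def)
    from posX[OF that this] show ?thesis .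
  qed
  have posm: "\<forall>j\<in>{-int n - 1..-1}. X \<omega> j \<ge> 1" if "\<omega> \<in> PosE" for \<omega>
  proof -
    have "{-int n - 1..-1} \<subseteq> W" using K by (auto simp: W_def)
    from posX[OF that this] show ?thesis .
  qed
  have PE: "PosE \<subseteq> space M" by (auto simp: PosE_def)
  have stepA: "A \<inter> PosE = (\<Union>s\<in>{..n}. E1 s)"
  proof (intro equalityI subsetI)
    fix \<omega> assume \<omega>: "\<omega> \<in> A \<inter> PosE"
    define s0 where "s0 = nat (s_idx n (X \<omega>))"
    have s0: "s0 \<le> n" "Csum n s0 (X \<omega>)"
      using Csum_least(1,2)[OF pos0[of \<omega>]] \<omega> by (auto simp: s0_def s_idx_def)
    have "restrict (X \<omega>) (W1 K s0) \<in> S1set n s0 K J a"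
      using \<omega> s0 posX[of \<omega> "W1 K s0"] W1W[OF s0(1)]
      by (subst S1_mem[OF K JK]) (auto simp: A_def Phi_Lmap s0_def)
    then show "\<omega> \<in> (\<Union>s\<in>{..n}. E1 s)" using \<omega> s0 by (auto simp: E1_def A_def)
  next
    fix \<omega> assume "\<omega> \<in> (\<Union>s\<in>{..n}. E1 s)"
    then obtain s where s: "s \<le> n" "\<omega> \<in> E1 s" by auto
    then have \<omega>: "\<omega> \<in> PosE" "\<omega> \<in> space M" and R: "restrict (X \<omega>) (W1 K s) \<in> S1set n s K J a"
      by (auto simp: E1_def)
    have "Csum n s (X \<omega>) \<and> (\<forall>j\<in>J. Lmap n s (X \<omega>) j = a j)"
      using R posX[OF \<omega>(1) W1W[OF s(1)]] by (subst (asm) S1_mem[OF K JK]) auto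
    moreover have "nat (s_idx n (X \<omega>)) = s" if "Csum n s (X \<omega>)"
      by (rule Csum_sidx[OF pos0[OF \<omega>(1)] s(1) that])
    ultimately show "\<omega> \<in> A \<inter> PosE" using \<omega> by (auto simp: A_def Phi_Lmap)
  qed
  have stepB: "B \<inter> PosE = (\<Union>s\<in>{..n}. E2 s)"
  proof (intro equalityI subsetI)
    fix \<omega> assume \<omega>: "\<omega> \<in> B \<inter> PosE"
    obtain s where s: "s \<le> n" "Dsum n s (X \<omega>)" using Dsum_ex[OF posm[of \<omega>]] \<omega> by auto
    have "restrict (X \<omega>) (W2 K s) \<in> S2set n s K J a"
      using \<omega> s posX[of \<omega> "W2 K s"] W2W[OF s(1)]
      by (subst S2_mem[OF K JK]) (auto simp: B_def)
    then show "\<omega> \<in> (\<Union>s\<in>{..n}. E2 s)" using \<omega> s by (auto simp: E2_def B_def)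
  next
    fix \<omega> assume "\<omega> \<in> (\<Union>s\<in>{..n}. E2 s)"
    then obtain s where s: "s \<le> n" "\<omega> \<in> E2 s" by auto
    then have \<omega>: "\<omega> \<in> PosE" "\<omega> \<in> space M" and R: "restrict (X \<omega>) (W2 K s) \<in> S2set n s K J a"
      by (auto simp: E2_def)
    have "Dsum n s (X \<omega>) \<and> (\<forall>j\<in>J. X \<omega> j = a j)"
      using R posX[OF \<omega>(1) W2W[OF s(1)]] by (subst (asm) S2_mem[OF K JK]) auto
    then show "\<omega> \<in> B \<inter> PosE" using \<omega> by (auto simp: B_def)
  qed
  have disj1: "disjoint_family_on E1 {..n}"
  proof (unfold disjoint_family_on_def, intro ballI impI)
    fix s s' assume ss: "s \<in> {..n}" "s' \<in> {..n}" "s \<noteq> s'"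
    show "E1 s \<inter> E1 s' = {}"
    proof (rule ccontr)
      assume "E1 s \<inter> E1 s' \<noteq> {}"
      then obtain \<omega> where \<omega>: "\<omega> \<in> E1 s" "\<omega> \<in> E1 s'" by auto
      have P: "\<omega> \<in> PosE" using \<omega> by (auto simp: E1_def)
      have "Csum n s (X \<omega>)" using \<omega>(1) posX[OF P W1W[of s]] ss by (auto simp: E1_def S1_mem[OF K JK])
      moreover have "Csum n s' (X \<omega>)" using \<omega>(2) posX[OF P W1W[of s']] ss by (auto simp: E1_def S1_mem[OF K JK])
      ultimately show False using Csum_uniq[OF pos0[OF P]] ss by auto
    qed
  qed
  have disj2: "disjoint_family_on E2 {..n}"
  proof (unfold disjoint_family_on_def, intro ballI impI)
    fix s s' assume ss: "s \<in> {..n}" "s' \<in> {..n}" "s \<noteq> s'"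
    show "E2 s \<inter> E2 s' = {}"
    proof (rule ccontr)
      assume "E2 s \<inter> E2 s' \<noteq> {}"
      then obtain \<omega> where \<omega>: "\<omega> \<in> E2 s" "\<omega> \<in> E2 s'" by auto
      have P: "\<omega> \<in> PosE" using \<omega> by (auto simp: E2_def)
      have "Dsum n s (X \<omega>)" using \<omega>(1) posX[OF P W2W[of s]] ss by (auto simp: E2_def S2_mem[OF K JK])
      moreover have "Dsum n s' (X \<omega>)" using \<omega>(2) posX[OF P W2W[of s']] ss by (auto simp: E2_def S2_mem[OF K JK])
      ultimately show False using Dsum_uniq[OF posm[OF P]] ss by auto
    qed
  qed
  have stepD: "prob (E1 s) = prob (E2 s)" if "s \<le> n" for s
  proof -
    have "emeasure M {\<omega>\<in>space M. restrict (X \<omega>) (W1 K s) \<in> S1set n s K J a}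
        = (\<integral>\<^sup>+x. ennreal (\<Prod>j\<in>W1 K s. geo p (x j)) \<partial>count_space (S1set n s K J a))"
      unfolding X_def by (rule SetLaw[OF PM G PL]) (auto simp: W1_def S1set_def)
    also have "\<dots> = (\<integral>\<^sup>+y. ennreal (\<Prod>i\<in>W2 K s. geo p (y i)) \<partial>count_space (S2set n s K J a))"
      by (rule block_integral[OF K JK])
    also have "\<dots> = emeasure M {\<omega>\<in>space M. restrict (X \<omega>) (W2 K s) \<in> S2set n s K J a}"
      unfolding X_def by (rule SetLaw[OF PM G PL, symmetric]) (auto simp: W2_def S2set_def)
    finally have "prob {\<omega>\<in>space M. restrict (X \<omega>) (W1 K s) \<in> S1set n s K J a}
        = prob {\<omega>\<in>space M. restrict (X \<omega>) (W2 K s) \<in> S2set n s K J a}"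
      by (simp add: emeasure_eq_measure)
    then show ?thesis unfolding E1_def E2_def
      using prob_full[OF PM PosS Pos1 F1] prob_full[OF PM PosS Pos1 F2] by simp
  qed
  have "prob A = prob (A \<inter> PosE)" using prob_full[OF PM PosS Pos1 AS] by simp
  also have "\<dots> = (\<Sum>s\<in>{..n}. prob (E1 s))" unfolding stepA
    by (rule finite_measure_finite_Union) (use E1S disj1 in auto)
  also have "\<dots> = (\<Sum>s\<in>{..n}. prob (E2 s))" by (rule sum.cong) (auto intro: stepD)
  also have "\<dots> = prob (B \<inter> PosE)" unfolding stepB
    by (rule finite_measure_finite_Union[symmetric]) (use E2S disj2 in auto)
  also have "\<dots> = prob B" using prob_full[OF PM PosS Pos1 BS] by simp
  finally show ?thesis by (simp add: A_def B_def X_def)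
qed



definition S3set :: "nat \<Rightarrow> nat \<Rightarrow> int \<Rightarrow> int set \<Rightarrow> (int \<Rightarrow> int) \<Rightarrow> (int \<Rightarrow> int) set" where
  "S3set n s K J a = {x \<in> PiE {0..int n + K} (\<lambda>_. UNIV). (\<forall>j\<in>{0..int n}. x j \<ge> 1) \<and> Csum n s x \<and> (\<forall>j\<in>J. Lmap n s x j = a j)}"

lemma L_local2:
  assumes K: "K \<ge> 0" "int s \<ge> K + 1" and j: "j \<in> {-K..K}" and E: "\<forall>i\<in>{0..int s + K}. x i = x' i"
  shows "Lmap n s x j = Lmap n s x' j"
proof -
  have E': "x i = x' i" if "0 \<le> i" "i \<le> int s + K" for i using E that by auto
  have S1: "(\<Sum>i\<in>{0..int s}. x i) = (\<Sum>i\<in>{0..int s}. x' i)" using K by (intro sum.cong refl E') auto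
  have S2: "(\<Sum>i\<in>{0..int s - 1}. x i) = (\<Sum>i\<in>{0..int s - 1}. x' i)" using K by (intro sum.cong refl E') auto
  show ?thesis using j K S1 S2 by (auto simp: Lmap_def Let_def intro!: E')
qed

lemma S3_mem:
  assumes K: "K \<ge> 0" "int s \<ge> K + 1" "s \<le> n" and J: "J \<subseteq> {-K..K}"
  shows "restrict x {0..int n + K} \<in> S3set n s K J a \<longleftrightarrow>
     (\<forall>j\<in>{0..int n}. x j \<ge> 1) \<and> Csum n s x \<and> (\<forall>j\<in>J. Lmap n s x j = a j)"
proof -
  have C: "Csum n s (restrict x {0..int n + K}) = Csum n s x"
    by (rule Csum_local) (use K in auto)
  have L: "Lmap n s (restrict x {0..int n + K}) j = Lmap n s x j" if "j \<in> J" for j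
    by (rule L_local2[OF K(1,2)]) (use that J K in auto)
  have P: "(\<forall>j\<in>{0..int n}. restrict x {0..int n + K} j \<ge> 1) = (\<forall>j\<in>{0..int n}. x j \<ge> 1)"
    using K by auto
  show ?thesis using C L P by (auto simp: S3set_def)
qed

definition tailset :: "'a measure \<Rightarrow> (int \<Rightarrow> 'a \<Rightarrow> int) \<Rightarrow> int \<Rightarrow> nat \<Rightarrow> 'a set" where
  "tailset M G K n = {\<omega>\<in>space M. int n < (\<Sum>j\<in>{0..K}. G j \<omega>)}"

lemma tailset_sets:
  fixes G :: "int \<Rightarrow> 'a \<Rightarrow> int"
  assumes G: "\<And>i. G i \<in> M \<rightarrow>\<^sub>M count_space UNIV"
  shows "tailset M G K n \<in> sets M"
proof -
  have GX: "\<And>j. (\<lambda>\<omega>. (\<lambda>j. G j \<omega>) j) \<in> M \<rightarrow>\<^sub>M count_space UNIV" using G by simp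
  have "{\<omega>\<in>space M. (\<lambda>g. int n < (\<Sum>j\<in>{0..K}. g j)) (\<lambda>j. G j \<omega>)} \<in> sets M"
  proof (rule loc_sets[where X="\<lambda>\<omega> j. G j \<omega>", OF GX])
    show "finite {0..K}" by simp
    fix g :: "int \<Rightarrow> int"
    have "(\<Sum>j\<in>{0..K}. restrict g {0..K} j) = (\<Sum>j\<in>{0..K}. g j)" by (rule sum.cong) auto
    then show "(int n < (\<Sum>j\<in>{0..K}. restrict g {0..K} j)) = (int n < (\<Sum>j\<in>{0..K}. g j))" by simp
  qed
  then show ?thesis by (simp add: tailset_def)
qed

lemma tailset_lim:
  fixes G :: "int \<Rightarrow> 'a \<Rightarrow> int"
  assumes PM: "prob_space M" and G: "\<And>i. G i \<in> M \<rightarrow>\<^sub>M count_space UNIV"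
  shows "(\<lambda>n. measure M (tailset M G K n)) \<longlonglongrightarrow> 0"
proof -
  interpret prob_space M by fact
  have "(\<lambda>n. measure M (tailset M G K n)) \<longlonglongrightarrow> measure M (\<Inter>n. tailset M G K n)"
  proof (rule finite_Lim_measure_decseq)
    show "range (tailset M G K) \<subseteq> sets M" using tailset_sets[OF G] by auto
    show "decseq (tailset M G K)" by (rule decseq_SucI) (auto simp: tailset_def)
  qed
  moreover have "(\<Inter>n. tailset M G K n) = {}"
  proof (rule ccontr)
    assume "(\<Inter>n. tailset M G K n) \<noteq> {}"
    then obtain \<omega> where "\<forall>n. \<omega> \<in> tailset M G K n" by auto
    then have "\<omega> \<in> tailset M G K (nat (\<Sum>j\<in>{0..K}. G j \<omega>))" by blast
    then have "int (nat (\<Sum>j\<in>{0..K}. G j \<omega>)) < (\<Sum>j\<in>{0..K}. G j \<omega>)" by (simp add: tailset_def)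
    then show False by linarith
  qed
  ultimately show ?thesis by simp
qed

lemma part2_bound:
  fixes G :: "int \<Rightarrow> 'a \<Rightarrow> int"
  assumes PM: "prob_space M" and G: "\<And>i. G i \<in> M \<rightarrow>\<^sub>M count_space UNIV"
    and PL: "pointlaw M p G {0..}" and K: "K \<ge> 0" and JK: "J \<subseteq> {-K..K}" and n: "nat K \<le> n"
  shows "\<bar>measure M {\<omega>\<in>space M. \<forall>j\<in>J. Phi n (\<lambda>j. G j \<omega>) j = a j}
     - (\<Sum>s\<in>{Suc (nat K)..n}. enn2real (\<integral>\<^sup>+x. ennreal (\<Prod>j\<in>{0..int n + K}. geo p (x j)) \<partial>count_space (S3set n s K J a)))\<bar>
     \<le> measure M (tailset M G K n)"
proof -
  interpret prob_space M by fact
  have J: "finite J" using JK by (rule finite_subset) simp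
  define X where "X = (\<lambda>\<omega> j. G j \<omega>)"
  have GX: "\<And>j. (\<lambda>\<omega>. X \<omega> j) \<in> M \<rightarrow>\<^sub>M count_space UNIV" using G by (simp add: X_def)
  define PosP where "PosP = {\<omega>\<in>space M. \<forall>j\<in>{0..int n}. G j \<omega> \<ge> 1}"
  have PosS: "PosP \<in> sets M" unfolding PosP_def by (rule Pos_sets[OF G]) simp
  have Pos1: "prob PosP = 1" unfolding PosP_def by (rule Pos_full[OF PM G PL]) auto
  define A where "A = {\<omega>\<in>space M. \<forall>j\<in>J. Phi n (X \<omega>) j = a j}"
  have AS: "A \<in> sets M" unfolding A_def
    by (rule cyl_sets[where X="\<lambda>\<omega>. Phi n (X \<omega>)", OF _ J]) (simp add: X_def Phi_coord_meas[OF G])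
  have CS: "{\<omega>\<in>space M. Csum n s (X \<omega>)} \<in> sets M" for s
  proof (rule loc_sets[OF GX])
    show "finite {0..int s}" by simp
    fix g :: "int \<Rightarrow> int"
    show "Csum n s (restrict g {0..int s}) = Csum n s g" by (rule Csum_local) auto
  qed
  define F where "F s = A \<inter> PosP \<inter> {\<omega>\<in>space M. Csum n s (X \<omega>)}" for s
  have FS: "F s \<in> sets M" for s unfolding F_def using AS PosS CS by blast
  have pos0: "\<forall>j\<in>{0..int n}. X \<omega> j \<ge> 1" if "\<omega> \<in> PosP" for \<omega>
    using that by (auto simp: PosP_def X_def)
  have stepA: "A \<inter> PosP = (\<Union>s\<in>{..n}. F s)"
  proof (intro equalityI subsetI)
    fix \<omega> assume \<omega>: "\<omega> \<in> A \<inter> PosP"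
    define s0 where "s0 = nat (s_idx n (X \<omega>))"
    have s0: "s0 \<le> n" "Csum n s0 (X \<omega>)"
      using Csum_least(1,2)[OF pos0[of \<omega>]] \<omega> by (auto simp: s0_def s_idx_def)
    then show "\<omega> \<in> (\<Union>s\<in>{..n}. F s)" using \<omega> by (auto simp: F_def A_def)
  qed (auto simp: F_def)
  have disj: "disjoint_family_on F {..n}"
  proof (unfold disjoint_family_on_def, intro ballI impI)
    fix s s' assume ss: "s \<in> {..n}" "s' \<in> {..n}" "s \<noteq> s'"
    show "F s \<inter> F s' = {}"
    proof (rule ccontr)
      assume "F s \<inter> F s' \<noteq> {}"
      then obtain \<omega> where \<omega>: "\<omega> \<in> F s" "\<omega> \<in> F s'" by auto
      have P: "\<omega> \<in> PosP" using \<omega> by (auto simp: F_def)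
      show False using Csum_uniq[OF pos0[OF P]] \<omega> ss by (auto simp: F_def)
    qed
  qed
  have probA: "prob A = (\<Sum>s\<in>{..n}. prob (F s))"
  proof -
    have "prob A = prob (A \<inter> PosP)" using prob_full[OF PM PosS Pos1 AS] by simp
    also have "\<dots> = (\<Sum>s\<in>{..n}. prob (F s))" unfolding stepA
      by (rule finite_measure_finite_Union) (use FS disj in auto)
    finally show ?thesis .
  qed
  have split: "{..n} = {..nat K} \<union> {Suc (nat K)..n}" using n by auto
  have "(\<Sum>s\<in>{..n}. prob (F s)) = (\<Sum>s\<in>{..nat K}. prob (F s)) + (\<Sum>s\<in>{Suc (nat K)..n}. prob (F s))"
    unfolding split by (rule sum.union_disjoint) auto
  moreover have upper: "prob (F s) = enn2real (\<integral>\<^sup>+x. ennreal (\<Prod>j\<in>{0..int n + K}. geo p (x j)) \<partial>count_space (S3set n s K J a))"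
    if s: "s \<in> {Suc (nat K)..n}" for s
  proof -
    have K2: "int s \<ge> K + 1" "s \<le> n" using s K by auto
    have "F s = {\<omega>\<in>space M. restrict (X \<omega>) {0..int n + K} \<in> S3set n s K J a}"
    proof (intro equalityI subsetI)
      fix \<omega> assume \<omega>: "\<omega> \<in> F s"
      then have P: "\<omega> \<in> PosP" and C: "Csum n s (X \<omega>)" and A: "\<omega> \<in> A" by (auto simp: F_def)
      have "nat (s_idx n (X \<omega>)) = s" by (rule Csum_sidx[OF pos0[OF P] K2(2) C])
      then show "\<omega> \<in> {\<omega>\<in>space M. restrict (X \<omega>) {0..int n + K} \<in> S3set n s K J a}"
        using P C A by (auto simp: A_def Phi_Lmap PosP_def X_def S3_mem[OF K K2(1,2) JK])
    next
      fix \<omega> assume \<omega>: "\<omega> \<in> {\<omega>\<in>space M. restrict (X \<omega>) {0..int n + K} \<in> S3set n s K J a}"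
      then have sp: "\<omega> \<in> space M" and R: "(\<forall>j\<in>{0..int n}. X \<omega> j \<ge> 1) \<and> Csum n s (X \<omega>) \<and> (\<forall>j\<in>J. Lmap n s (X \<omega>) j = a j)"
        using S3_mem[OF K K2(1,2) JK] by auto
      have "nat (s_idx n (X \<omega>)) = s" using R Csum_sidx[OF _ K2(2)] by blast
      then show "\<omega> \<in> F s" using sp R by (auto simp: F_def A_def PosP_def X_def Phi_Lmap)
    qed
    then have "prob (F s) = enn2real (emeasure M {\<omega>\<in>space M. restrict (X \<omega>) {0..int n + K} \<in> S3set n s K J a})"
      by (simp add: measure_def)
    also have "emeasure M {\<omega>\<in>space M. restrict (X \<omega>) {0..int n + K} \<in> S3set n s K J a}
        = (\<integral>\<^sup>+x. ennreal (\<Prod>j\<in>{0..int n + K}. geo p (x j)) \<partial>count_space (S3set n s K J a))"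
      unfolding X_def by (rule SetLaw[OF PM G PL]) (auto simp: S3set_def)
    finally show ?thesis .
  qed
  moreover have lower: "0 \<le> (\<Sum>s\<in>{..nat K}. prob (F s)) \<and> (\<Sum>s\<in>{..nat K}. prob (F s)) \<le> prob (tailset M G K n)"
  proof
    show "0 \<le> (\<Sum>s\<in>{..nat K}. prob (F s))" by (rule sum_nonneg) simp
    have dK: "disjoint_family_on F {..nat K}" using disj n unfolding disjoint_family_on_def by auto
    have "(\<Sum>s\<in>{..nat K}. prob (F s)) = prob (\<Union>s\<in>{..nat K}. F s)"
      by (rule finite_measure_finite_Union[symmetric]) (use FS dK in auto)
    also have "\<dots> \<le> prob (tailset M G K n)"
    proof (rule finite_measure_mono)
      show "tailset M G K n \<in> sets M" by (rule tailset_sets[OF G])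
      show "(\<Union>s\<in>{..nat K}. F s) \<subseteq> tailset M G K n"
      proof
        fix \<omega> assume "\<omega> \<in> (\<Union>s\<in>{..nat K}. F s)"
        then obtain s where s: "s \<le> nat K" "\<omega> \<in> F s" by auto
        then have P: "\<omega> \<in> PosP" and C: "Csum n s (X \<omega>)" and sp: "\<omega> \<in> space M" by (auto simp: F_def)
        have "(\<Sum>j\<in>{0..int s}. X \<omega> j) \<le> (\<Sum>j\<in>{0..int (nat K)}. X \<omega> j)"
          by (rule psum_mono[OF pos0[OF P]]) (use s n in auto)
        then show "\<omega> \<in> tailset M G K n" using C sp K by (auto simp: tailset_def Csum_def X_def)
      qed
    qed
    finally show "(\<Sum>s\<in>{..nat K}. prob (F s)) \<le> prob (tailset M G K n)" .
  qed
  ultimately show ?thesis using probA unfolding A_def X_def by (simp add: abs_le_iff)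
qed



definition gpmf :: "real \<Rightarrow> int pmf" where
  "gpmf p = map_pmf (\<lambda>k. int k + 1) (geometric_pmf p)"

lemma pmf_gpmf:
  assumes p: "0 < p" "p \<le> 1"
  shows "pmf (gpmf p) k = geo p k"
proof (cases "k \<ge> 1")
  case True
  have inj: "inj (\<lambda>k::nat. int k + 1)" by (auto simp: inj_on_def)
  have "k = (\<lambda>k. int k + 1) (nat (k - 1))" using True by simp
  then have "pmf (gpmf p) k = pmf (gpmf p) ((\<lambda>k. int k + 1) (nat (k - 1)))" by simp
  also have "\<dots> = pmf (geometric_pmf p) (nat (k - 1))" unfolding gpmf_def by (rule pmf_map_inj'[OF inj])
  also have "\<dots> = (1 - p) ^ nat (k - 1) * p" using p by simp
  finally show ?thesis using True by (simp add: geo_def)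
next
  case False
  have "k \<notin> (\<lambda>k. int k + 1) ` set_pmf (geometric_pmf p)" using False by auto
  then have "pmf (gpmf p) k = 0" unfolding gpmf_def by (rule pmf_map_outside)
  then show ?thesis using False by (simp add: geo_def)
qed

lemma geo_nonneg: "0 \<le> p \<Longrightarrow> p \<le> 1 \<Longrightarrow> 0 \<le> geo p k"
  by (simp add: geo_def)

definition Rmod :: "real \<Rightarrow> (int \<Rightarrow> int) measure" where
  "Rmod p = Pi\<^sub>M UNIV (\<lambda>_::int. measure_pmf (gpmf p))"

lemma R_prob: "prob_space (Rmod p)"
  unfolding Rmod_def by (rule prob_space_PiM) (rule prob_space_measure_pmf)

lemma R_coord: "(\<lambda>\<omega>. \<omega> i) \<in> Rmod p \<rightarrow>\<^sub>M count_space UNIV"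
proof -
  have "(\<lambda>\<omega>. \<omega> i) \<in> Rmod p \<rightarrow>\<^sub>M measure_pmf (gpmf p)"
    unfolding Rmod_def by (rule measurable_component_singleton) simp
  moreover have "measurable (Rmod p) (measure_pmf (gpmf p)) = measurable (Rmod p) (count_space UNIV)"
    by (rule measurable_cong_sets) auto
  ultimately show ?thesis by simp
qed

lemma R_pointlaw:
  assumes p: "0 < p" "p \<le> 1"
  shows "pointlaw (Rmod p) p (\<lambda>i \<omega>. \<omega> i) UNIV"
  unfolding pointlaw_def
proof (intro allI impI)
  fix V :: "int set" and a :: "int \<Rightarrow> int"
  assume V: "finite V"
  interpret M': prob_space "measure_pmf (gpmf p)" by (rule prob_space_measure_pmf)
  interpret P: product_prob_space "\<lambda>_::int. measure_pmf (gpmf p)" "UNIV :: int set" ..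
  have e: "{\<omega>\<in>space (Rmod p). \<forall>j\<in>V. \<omega> j = a j}
      = prod_emb UNIV (\<lambda>_. measure_pmf (gpmf p)) V (PiE V (\<lambda>j. {a j}))"
    by (auto simp: prod_emb_def Rmod_def space_PiM PiE_iff)
  have "emeasure (Rmod p) {\<omega>\<in>space (Rmod p). \<forall>j\<in>V. \<omega> j = a j} = (\<Prod>j\<in>V. emeasure (measure_pmf (gpmf p)) {a j})"
    unfolding e by (unfold Rmod_def, rule P.emeasure_PiM_emb) (use V in auto)
  also have "\<dots> = (\<Prod>j\<in>V. ennreal (geo p (a j)))"
    by (simp add: emeasure_pmf_single pmf_gpmf[OF p])
  also have "\<dots> = ennreal (\<Prod>j\<in>V. geo p (a j))"
    by (rule prod_ennreal) (use p in \<open>simp add: geo_nonneg\<close>)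
  finally show "measure (Rmod p) {\<omega>\<in>space (Rmod p). \<forall>j\<in>V. \<omega> j = a j} = (\<Prod>j\<in>V. geo p (a j))"
    using p by (simp add: measure_def prod_nonneg geo_nonneg)
qed

lemma indep_to_pointlaw:
  fixes G :: "int \<Rightarrow> 'a \<Rightarrow> int"
  assumes PM: "prob_space M"
    and ind: "prob_space.indep_vars M (\<lambda>_. count_space UNIV) G I"
    and geom: "\<forall>i\<in>I. geom_pos_rv M p (G i)"
  shows "pointlaw M p G I"
  unfolding pointlaw_def
proof (intro allI impI)
  interpret prob_space M by fact
  fix V a assume V: "finite V" "V \<subseteq> I"
  show "prob {\<omega>\<in>space M. \<forall>j\<in>V. G j \<omega> = a j} = (\<Prod>j\<in>V. geo p (a j))"
  proof (cases "V = {}")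
    case True
    then show ?thesis by (simp add: prob_space)
  next
    case False
    have "{\<omega>\<in>space M. \<forall>j\<in>V. G j \<omega> = a j} = (\<Inter>j\<in>V. G j -` {a j} \<inter> space M)"
      using False by auto
    also have "prob \<dots> = (\<Prod>j\<in>V. prob (G j -` {a j} \<inter> space M))"
      by (rule indep_varsD[OF ind False V(1,2)]) simp
    also have "\<dots> = (\<Prod>j\<in>V. geo p (a j))"
    proof (rule prod.cong)
      fix j assume "j \<in> V"
      then have "geom_pos_rv M p (G j)" using geom V by auto
      moreover have "G j -` {a j} \<inter> space M = {\<omega>\<in>space M. G j \<omega> = a j}" by auto
      ultimately show "prob (G j -` {a j} \<inter> space M) = geo p (a j)"
        by (simp add: geom_pos_rv_def geo_def)
    qed simp
    finally show ?thesis .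
  qed
qed



lemma pointlaw_to_indep:
  fixes G :: "int \<Rightarrow> 'a \<Rightarrow> int"
  assumes PM: "prob_space M" and G: "\<And>i. G i \<in> M \<rightarrow>\<^sub>M count_space UNIV"
    and p: "0 < p" "p \<le> 1" and PL: "pointlaw M p G UNIV"
  shows "prob_space.indep_vars M (\<lambda>_. count_space UNIV) G UNIV \<and> (\<forall>i. geom_pos_rv M p (G i))"
proof
  interpret prob_space M by fact
  have pt: "measure M {\<omega>\<in>space M. G i \<omega> = k} = geo p k" for i k
    using PL unfolding pointlaw_def by (erule_tac x="{i}" in allE, erule_tac x="\<lambda>_. k" in allE) simp
  show "\<forall>i. geom_pos_rv M p (G i)" using pt by (simp add: geom_pos_rv_def geo_def)
  have GX: "\<And>j. (\<lambda>\<omega>. (\<lambda>i. G i \<omega>) j) \<in> M \<rightarrow>\<^sub>M count_space UNIV" using G by simp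
  have RX: "\<And>j. (\<lambda>\<omega>. (\<lambda>\<omega>. \<omega>) \<omega> j) \<in> Rmod p \<rightarrow>\<^sub>M count_space UNIV" using R_coord by simp
  have "distr M (Pi\<^sub>M UNIV (\<lambda>_. count_space UNIV)) (\<lambda>x. \<lambda>i\<in>UNIV. G i x) = seq_law M (\<lambda>x i. G i x)"
    by (simp add: seq_law_def restrict_UNIV)
  also have "\<dots> = seq_law (Rmod p) (\<lambda>\<omega>. \<omega>)"
  proof (rule seq_law_eqI[OF PM R_prob GX RX])
    fix J :: "int set" and a assume J: "finite J"
    have "measure M {\<omega>\<in>space M. \<forall>j\<in>J. G j \<omega> = a j} = (\<Prod>j\<in>J. geo p (a j))"
      using PL J by (simp add: pointlaw_def)
    also have "\<dots> = measure (Rmod p) {\<omega>\<in>space (Rmod p). \<forall>j\<in>J. \<omega> j = a j}"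
      using R_pointlaw[OF p] J by (simp add: pointlaw_def)
    finally show "measure M {\<omega>\<in>space M. \<forall>j\<in>J. G j \<omega> = a j} = measure (Rmod p) {\<omega>\<in>space (Rmod p). \<forall>j\<in>J. \<omega> j = a j}" .
  qed
  also have "\<dots> = Rmod p"
    unfolding seq_law_def by (rule distr_id2) (unfold Rmod_def, rule sets_PiM_cong, auto)
  also have "\<dots> = Pi\<^sub>M UNIV (\<lambda>i. distr M (count_space UNIV) (G i))"
    unfolding Rmod_def
  proof (rule PiM_cong)
    fix i :: int
    show "measure_pmf (gpmf p) = distr M (count_space UNIV) (G i)"
    proof (rule measure_eqI_countable[where A=UNIV])
      fix k :: int
      have "emeasure (distr M (count_space UNIV) (G i)) {k} = emeasure M (G i -` {k} \<inter> space M)"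
        by (rule emeasure_distr[OF G]) simp
      also have "G i -` {k} \<inter> space M = {\<omega>\<in>space M. G i \<omega> = k}" by auto
      also have "emeasure M \<dots> = ennreal (geo p k)" using pt by (simp add: emeasure_eq_measure)
      finally show "emeasure (measure_pmf (gpmf p)) {k} = emeasure (distr M (count_space UNIV) (G i)) {k}"
        by (simp add: emeasure_pmf_single pmf_gpmf[OF p])
    qed auto
  qed simp
  finally have "distr M (Pi\<^sub>M UNIV (\<lambda>_. count_space UNIV)) (\<lambda>x. \<lambda>i\<in>UNIV. G i x) = Pi\<^sub>M UNIV (\<lambda>i. distr M (count_space UNIV) (G i))" .
  then show "indep_vars (\<lambda>_. count_space UNIV) G UNIV"
    by (subst indep_vars_iff_distr_eq_PiM) (auto intro: G)
qed

lemma pointlaw_mono: "pointlaw M p G I \<Longrightarrow> I' \<subseteq> I \<Longrightarrow> pointlaw M p G I'"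
  unfolding pointlaw_def by blast

lemma pointlaw_ext:
  fixes G :: "int \<Rightarrow> 'a \<Rightarrow> int"
  assumes PM: "prob_space M" and G: "\<And>i. G i \<in> M \<rightarrow>\<^sub>M count_space UNIV"
    and p: "0 < p" "p \<le> 1" and PL0: "pointlaw M p G {0..}"
    and INV: "\<And>n J a. finite J \<Longrightarrow> measure M {\<omega>\<in>space M. \<forall>j\<in>J. Phi n (\<lambda>j. G j \<omega>) j = a j}
                                  = measure M {\<omega>\<in>space M. \<forall>j\<in>J. G j \<omega> = a j}"
  shows "pointlaw M p G UNIV"
  unfolding pointlaw_def
proof (intro allI impI)
  fix V :: "int set" and a :: "int \<Rightarrow> int"
  assume V: "finite V" "V \<subseteq> UNIV"
  define K where "K = (\<Sum>j\<in>V. \<bar>j\<bar>)"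
  have K: "K \<ge> 0" unfolding K_def by (rule sum_nonneg) simp
  have JK: "V \<subseteq> {-K..K}" unfolding K_def by (rule bound_K[OF V(1)])
  let ?GR = "\<lambda>i (\<omega>::int\<Rightarrow>int). \<omega> i"
  have GR: "\<And>i. ?GR i \<in> Rmod p \<rightarrow>\<^sub>M count_space UNIV" by (rule R_coord)
  have PLR: "pointlaw (Rmod p) p ?GR UNIV" by (rule R_pointlaw[OF p])
  have PLR0: "pointlaw (Rmod p) p ?GR {0..}" by (rule pointlaw_mono[OF PLR]) simp
  define c where "c n = (\<Sum>s\<in>{Suc (nat K)..n}. enn2real (\<integral>\<^sup>+x. ennreal (\<Prod>j\<in>{0..int n + K}. geo p (x j)) \<partial>count_space (S3set n s K V a)))" for n
  define u where "u n = measure M (tailset M G K n) + measure (Rmod p) (tailset (Rmod p) ?GR K n)" for n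
  have u0: "u \<longlonglongrightarrow> 0"
    unfolding u_def using tendsto_add[OF tailset_lim[OF PM G] tailset_lim[OF R_prob GR]] by simp
  define d where "d = \<bar>measure M {\<omega>\<in>space M. \<forall>j\<in>V. G j \<omega> = a j} - (\<Prod>j\<in>V. geo p (a j))\<bar>"
  have bnd: "d \<le> u n" if n: "nat K \<le> n" for n
  proof -
    have b1: "\<bar>measure M {\<omega>\<in>space M. \<forall>j\<in>V. Phi n (\<lambda>j. G j \<omega>) j = a j} - c n\<bar> \<le> measure M (tailset M G K n)"
      unfolding c_def by (rule part2_bound[OF PM G PL0 K JK n])
    have b2: "\<bar>measure (Rmod p) {\<omega>\<in>space (Rmod p). \<forall>j\<in>V. Phi n (\<lambda>j. ?GR j \<omega>) j = a j} - c n\<bar>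
        \<le> measure (Rmod p) (tailset (Rmod p) ?GR K n)"
      unfolding c_def by (rule part2_bound[OF R_prob GR PLR0 K JK n])
    have e1: "measure M {\<omega>\<in>space M. \<forall>j\<in>V. Phi n (\<lambda>j. G j \<omega>) j = a j} = measure M {\<omega>\<in>space M. \<forall>j\<in>V. G j \<omega> = a j}"
      by (rule INV[OF V(1)])
    have e2: "measure (Rmod p) {\<omega>\<in>space (Rmod p). \<forall>j\<in>V. Phi n (\<lambda>j. ?GR j \<omega>) j = a j}
        = measure (Rmod p) {\<omega>\<in>space (Rmod p). \<forall>j\<in>V. ?GR j \<omega> = a j}"
      by (rule Phi_points[OF R_prob GR PLR V(1)])
    have e3: "measure (Rmod p) {\<omega>\<in>space (Rmod p). \<forall>j\<in>V. ?GR j \<omega> = a j} = (\<Prod>j\<in>V. geo p (a j))"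
      using PLR V by (simp add: pointlaw_def)
    show ?thesis using b1 b2 e1 e2 e3 unfolding d_def u_def by linarith
  qed
  have "d \<le> 0"
  proof (rule tendsto_le[OF trivial_limit_sequentially u0 tendsto_const])
    show "\<forall>\<^sub>F n in sequentially. d \<le> u n" using bnd by (auto simp: eventually_at_top_linorder)
  qed
  then show "measure M {\<omega>\<in>space M. \<forall>j\<in>V. G j \<omega> = a j} = (\<Prod>j\<in>V. geo p (a j))"
    unfolding d_def by simp
qed

theorem theorem3p6:
  fixes M :: "'a measure" and G :: "int \<Rightarrow> 'a \<Rightarrow> int" and p :: real
  assumes "prob_space M"
    and "0 < p" and "p \<le> 1"
    and "\<And>i. G i \<in> measurable M (count_space UNIV)"
  shows "(prob_space.indep_vars M (\<lambda>_. count_space UNIV) G UNIV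
            \<and> (\<forall>i. geom_pos_rv M p (G i)))
     \<longleftrightarrow>
         (prob_space.indep_vars M (\<lambda>_. count_space UNIV) G {0..}
            \<and> (\<forall>i\<ge>0. geom_pos_rv M p (G i))
            \<and> (\<forall>n::nat. seq_law M (\<lambda>\<omega>. Phi n (\<lambda>i. G i \<omega>)) = seq_law M (\<lambda>\<omega> i. G i \<omega>)))"
proof -
  note PM = assms(1) and p = assms(2,3) and G = assms(4)
  interpret prob_space M by fact
  have GX: "\<And>j. (\<lambda>\<omega>. (\<lambda>i. G i \<omega>) j) \<in> M \<rightarrow>\<^sub>M count_space UNIV" using G by simp
  have PX: "\<And>j. (\<lambda>\<omega>. (\<lambda>\<omega>. Phi n (\<lambda>i. G i \<omega>)) \<omega> j) \<in> M \<rightarrow>\<^sub>M count_space UNIV" for n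
    using Phi_coord_meas[OF G] by simp
  show ?thesis
  proof
    assume A: "indep_vars (\<lambda>_. count_space UNIV) G UNIV \<and> (\<forall>i. geom_pos_rv M p (G i))"
    have PL: "pointlaw M p G UNIV" using indep_to_pointlaw[OF PM] A by auto
    have "indep_vars (\<lambda>_. count_space UNIV) G {0..}" using A by (auto intro: indep_vars_subset)
    moreover have "\<forall>n::nat. seq_law M (\<lambda>\<omega>. Phi n (\<lambda>i. G i \<omega>)) = seq_law M (\<lambda>\<omega> i. G i \<omega>)"
    proof
      fix n
      show "seq_law M (\<lambda>\<omega>. Phi n (\<lambda>i. G i \<omega>)) = seq_law M (\<lambda>\<omega> i. G i \<omega>)"
        by (rule seq_law_eqI[OF PM PM PX GX]) (simp add: Phi_points[OF PM G PL])
    qed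
    ultimately show "indep_vars (\<lambda>_. count_space UNIV) G {0..} \<and> (\<forall>i\<ge>0. geom_pos_rv M p (G i))
        \<and> (\<forall>n::nat. seq_law M (\<lambda>\<omega>. Phi n (\<lambda>i. G i \<omega>)) = seq_law M (\<lambda>\<omega> i. G i \<omega>))"
      using A by auto
  next
    assume B: "indep_vars (\<lambda>_. count_space UNIV) G {0..} \<and> (\<forall>i\<ge>0. geom_pos_rv M p (G i))
        \<and> (\<forall>n::nat. seq_law M (\<lambda>\<omega>. Phi n (\<lambda>i. G i \<omega>)) = seq_law M (\<lambda>\<omega> i. G i \<omega>))"
    have PL0: "pointlaw M p G {0..}" using indep_to_pointlaw[OF PM] B by auto
    have INV: "measure M {\<omega>\<in>space M. \<forall>j\<in>J. Phi n (\<lambda>j. G j \<omega>) j = a j}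
        = measure M {\<omega>\<in>space M. \<forall>j\<in>J. G j \<omega> = a j}" if J: "finite J" for n J a
    proof -
      have L: "seq_law M (\<lambda>\<omega>. Phi n (\<lambda>i. G i \<omega>)) = seq_law M (\<lambda>\<omega> i. G i \<omega>)" using B by simp
      show ?thesis using seq_law_points[OF PX[of n] GX L J, where a=a] by simp
    qed
    have "pointlaw M p G UNIV" by (rule pointlaw_ext[OF PM G p PL0 INV])
    then show "indep_vars (\<lambda>_. count_space UNIV) G UNIV \<and> (\<forall>i. geom_pos_rv M p (G i))"
      by (rule pointlaw_to_indep[OF PM G p])
  qed
qed


end
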